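(* Let $\mathcal{F}\subset L_2([0,1])$ and let $(\mathcal{E},\mathcal{D})$ be a compression code for $\mathcal{F}$ operating at rate $r$ and distortion $\delta$, with codebook $\mathcal{C}$. Let $W_1,\dots,W_d$ be independent standard Wiener processes on $[0,1]$ and define $\mathcal{A}:L_2([0,1])\to\mathbb{R}^d$ by $\mathcal{A}(f)_i=\int_0^1 f(t)\,dW_i(t)$. For $f_o\in\mathcal{F}$ let ${\bf y}_o=\mathcal{A}(f_o)+{\bf z}$, where ${\bf z}\in\mathbb{R}^d$ (possibly depending on the Wiener processes and $f_o$) satisfies $\|{\bf z}\|_2\le\zeta$, and let $\hat f_o$ be any element of $\arg\min_{g\in\mathcal{C}}\|{\bf y}_o-\mathcal{A}(g)\|_2^2$. Then for arbitrary $\tau_1>0$ and $\tau_2\in(0,1)$, \[ \|\hat f_o-f_o\|_2\le\delta\sqrt{\frac{1+\tau_1}{1-\tau_2}}+\frac{2\zeta}{\sqrt{(1-\tau_2)d}} \] with probability exceeding \[ 1-2^{r}{\rm e}^{\frac d2(\tau_2+\log(1-\tau_2))}-{\rm e}^{-\frac d2(\tau_1-\log(1+\tau_1))}. \]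
   Context: $L_2([0,1])$ is the set of real functions on $[0,1]$ with $\|f\|_2=(\int_0^1 f(t)^2dt)^{1/2}<\infty$; the integrals are Itô integrals. A compression code for $\mathcal{F}$ at rate $r$ is a pair of maps $\mathcal{E}:\mathcal{F}\to\{1,\dots,2^r\}$, $\mathcal{D}:\{1,\dots,2^r\}\to L_2([0,1])$; its codebook is $\mathcal{C}=\{\mathcal{D}(\mathcal{E}(f)):f\in\mathcal{F}\}$ and its distortion is $\delta=\sup_{f\in\mathcal{F}}\|f-\mathcal{D}(\mathcal{E}(f))\|_2$. $\log$ is the natural logarithm. The probability is over the Wiener processes. *)

theory Defs
  imports "HOL-Probability.Probability"
begin

definition in_L2 :: "(real \<Rightarrow> real) \<Rightarrow> bool" where
  "in_L2 f \<longleftrightarrow> set_borel_measurable lborel {0..1} f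
     \<and> set_integrable lborel {0..1} (\<lambda>t. (f t)\<^sup>2)"

definition L2norm :: "(real \<Rightarrow> real) \<Rightarrow> real" where
  "L2norm f = sqrt (LINT t:{0..1}|lborel. (f t)\<^sup>2)"

definition compression_code ::
  "(real \<Rightarrow> real) set \<Rightarrow> nat \<Rightarrow> ((real \<Rightarrow> real) \<Rightarrow> nat) \<Rightarrow> (nat \<Rightarrow> (real \<Rightarrow> real)) \<Rightarrow> bool" where
  "compression_code F r E D \<longleftrightarrow>
     (\<forall>f\<in>F. E f \<in> {1..2^r}) \<and> (\<forall>k\<in>{1..2^r}. in_L2 (D k))"

definition codebook ::
  "(real \<Rightarrow> real) set \<Rightarrow> ((real \<Rightarrow> real) \<Rightarrow> nat) \<Rightarrow> (nat \<Rightarrow> (real \<Rightarrow> real)) \<Rightarrow> (real \<Rightarrow> real) set" where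
  "codebook F E D = {D (E f) | f. f \<in> F}"

definition distortion ::
  "(real \<Rightarrow> real) set \<Rightarrow> ((real \<Rightarrow> real) \<Rightarrow> nat) \<Rightarrow> (nat \<Rightarrow> (real \<Rightarrow> real)) \<Rightarrow> ereal" where
  "distortion F E D = (SUP f\<in>F. ereal (L2norm (\<lambda>t. f t - D (E f) t)))"

definition std_wiener :: "'a measure \<Rightarrow> ('a \<Rightarrow> real \<Rightarrow> real) \<Rightarrow> bool" where
  "std_wiener M X \<longleftrightarrow>
     (\<forall>t\<in>{0..1}. (\<lambda>\<omega>. X \<omega> t) \<in> borel_measurable M)
   \<and> (AE \<omega> in M. X \<omega> 0 = 0)
   \<and> (AE \<omega> in M. continuous_on {0..1} (X \<omega>))
   \<and> (\<forall>s t. 0 \<le> s \<and> s < t \<and> t \<le> 1 \<longrightarrow>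
        distributed M lborel (\<lambda>\<omega>. X \<omega> t - X \<omega> s) (\<lambda>x. ennreal (normal_density 0 (sqrt (t - s)) x)))
   \<and> (\<forall>(ts :: nat \<Rightarrow> real) n. 0 \<le> ts 0 \<and> ts n \<le> 1 \<and> (\<forall>k<n. ts k < ts (Suc k)) \<longrightarrow>
        prob_space.indep_vars M (\<lambda>_. borel) (\<lambda>k \<omega>. X \<omega> (ts (Suc k)) - X \<omega> (ts k)) {..<n})"

definition partition01 :: "nat \<Rightarrow> (nat \<Rightarrow> real) \<Rightarrow> bool" where
  "partition01 n ts \<longleftrightarrow> ts 0 = 0 \<and> ts n = 1 \<and> (\<forall>k<n. ts k < ts (Suc k))"

definition stepfun :: "nat \<Rightarrow> (nat \<Rightarrow> real) \<Rightarrow> (nat \<Rightarrow> real) \<Rightarrow> real \<Rightarrow> real" where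
  "stepfun n ts c t = (\<Sum>k<n. c k * indicator {ts k<..ts (Suc k)} t)"

definition stepint :: "('a \<Rightarrow> real \<Rightarrow> real) \<Rightarrow> nat \<Rightarrow> (nat \<Rightarrow> real) \<Rightarrow> (nat \<Rightarrow> real) \<Rightarrow> 'a \<Rightarrow> real" where
  "stepint X n ts c \<omega> = (\<Sum>k<n. c k * (X \<omega> (ts (Suc k)) - X \<omega> (ts k)))"

text \<open>Y is (a version of) the integral of f against X: the L2(M)-limit of the integrals of
  step functions converging to f in L2([0,1]).\<close>

definition wiener_integral ::
  "'a measure \<Rightarrow> ('a \<Rightarrow> real \<Rightarrow> real) \<Rightarrow> (real \<Rightarrow> real) \<Rightarrow> ('a \<Rightarrow> real) \<Rightarrow> bool" where
  "wiener_integral M X f Y \<longleftrightarrow> Y \<in> borel_measurable M \<and>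
     (\<exists>(n :: nat \<Rightarrow> nat) ts c.
        (\<forall>m. partition01 (n m) (ts m))
      \<and> (\<lambda>m. L2norm (\<lambda>t. f t - stepfun (n m) (ts m) (c m) t)) \<longlonglongrightarrow> 0
      \<and> (\<lambda>m. \<integral>\<^sup>+ \<omega>. ennreal ((Y \<omega> - stepint X (n m) (ts m) (c m) \<omega>)\<^sup>2) \<partial>M) \<longlonglongrightarrow> 0)"

end

theory Submission
  imports Defs
begin

lemma gauss_mgf_density:
  assumes s: "0 < \<sigma>" and l: "2 * l * \<sigma>\<^sup>2 < 1"
  shows "(\<integral>\<^sup>+x. ennreal (normal_density 0 \<sigma> x) * ennreal (exp (l * x\<^sup>2)) \<partial>lborel)
         = ennreal (1 / sqrt (1 - 2 * l * \<sigma>\<^sup>2))"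
proof -
  define q where "q = 1 - 2 * l * \<sigma>\<^sup>2"
  have q: "0 < q" using l by (simp add: q_def)
  define \<sigma>' where "\<sigma>' = \<sigma> / sqrt q"
  have s': "0 < \<sigma>'" using s q by (simp add: \<sigma>'_def)
  have eq: "normal_density 0 \<sigma> x * exp (l * x\<^sup>2) = (1 / sqrt q) * normal_density 0 \<sigma>' x" for x
  proof -
    have a: "\<sigma>'\<^sup>2 = \<sigma>\<^sup>2 / q" using q by (simp add: \<sigma>'_def power_divide)
    have b: "- x\<^sup>2 / (2 * \<sigma>\<^sup>2) + l * x\<^sup>2 = - x\<^sup>2 / (2 * \<sigma>'\<^sup>2)"
      using s q unfolding a q_def by (simp add: field_simps)
    have c: "1 / sqrt (2 * pi * \<sigma>\<^sup>2) = (1 / sqrt q) * (1 / sqrt (2 * pi * \<sigma>'\<^sup>2))"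
      using s q unfolding a by (simp add: real_sqrt_divide real_sqrt_mult)
    have e: "exp (-(x - 0)\<^sup>2 / (2 * \<sigma>\<^sup>2)) * exp (l * x\<^sup>2) = exp (-(x - 0)\<^sup>2 / (2 * \<sigma>'\<^sup>2))"
      using b by (simp add: mult_exp_exp)
    have "normal_density 0 \<sigma> x * exp (l * x\<^sup>2)
       = 1 / sqrt (2 * pi * \<sigma>\<^sup>2) * (exp (-(x - 0)\<^sup>2 / (2 * \<sigma>\<^sup>2)) * exp (l * x\<^sup>2))"
      unfolding normal_density_def by (simp only: mult.assoc)
    also have "\<dots> = (1 / sqrt q) * (1 / sqrt (2 * pi * \<sigma>'\<^sup>2)) * exp (-(x - 0)\<^sup>2 / (2 * \<sigma>'\<^sup>2))"
      by (simp only: e c)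
    finally show ?thesis unfolding normal_density_def by (simp only: mult.assoc)
  qed
  have "(\<integral>\<^sup>+x. ennreal (normal_density 0 \<sigma> x) * ennreal (exp (l * x\<^sup>2)) \<partial>lborel)
      = (\<integral>\<^sup>+x. ennreal (1 / sqrt q) * ennreal (normal_density 0 \<sigma>' x) \<partial>lborel)"
  proof (intro nn_integral_cong)
    fix x
    have "ennreal (normal_density 0 \<sigma> x) * ennreal (exp (l * x\<^sup>2)) = ennreal (normal_density 0 \<sigma> x * exp (l * x\<^sup>2))"
      by (simp add: ennreal_mult)
    also have "\<dots> = ennreal ((1 / sqrt q) * normal_density 0 \<sigma>' x)" by (simp only: eq)
    also have "\<dots> = ennreal (1 / sqrt q) * ennreal (normal_density 0 \<sigma>' x)"
      using q by (intro ennreal_mult) auto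
    finally show "ennreal (normal_density 0 \<sigma> x) * ennreal (exp (l * x\<^sup>2)) = ennreal (1 / sqrt q) * ennreal (normal_density 0 \<sigma>' x)" .
  qed
  also have "\<dots> = ennreal (1 / sqrt q) * (\<integral>\<^sup>+x. ennreal (normal_density 0 \<sigma>' x) \<partial>lborel)"
    by (rule nn_integral_cmult) simp
  also have "(\<integral>\<^sup>+x. ennreal (normal_density 0 \<sigma>' x) \<partial>lborel) = 1"
    using s' by (subst nn_integral_eq_integral) (auto intro: integrable_normal_density)
  finally show ?thesis by (simp add: q_def)
qed

lemma (in prob_space) gauss_mgf:
  assumes D: "distributed M lborel S (normal_density 0 \<sigma>)"
    and s: "0 < \<sigma>" and l: "2 * l * \<sigma>\<^sup>2 < 1"
  shows "(\<integral>\<^sup>+\<omega>. ennreal (exp (l * (S \<omega>)\<^sup>2)) \<partial>M) = ennreal (1 / sqrt (1 - 2 * l * \<sigma>\<^sup>2))"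
proof -
  have "(\<integral>\<^sup>+\<omega>. ennreal (exp (l * (S \<omega>)\<^sup>2)) \<partial>M)
     = (\<integral>\<^sup>+x. ennreal (normal_density 0 \<sigma> x) * ennreal (exp (l * x\<^sup>2)) \<partial>lborel)"
    by (rule distributed_nn_integral[OF D, symmetric]) simp
  then show ?thesis using gauss_mgf_density[OF s l] by simp
qed

definition sqint :: "(real \<Rightarrow> real) \<Rightarrow> bool" where
  "sqint g \<longleftrightarrow> g \<in> borel_measurable lborel \<and> integrable lborel (\<lambda>x. (g x)\<^sup>2)"

definition N2 :: "(real \<Rightarrow> real) \<Rightarrow> real" where
  "N2 g = sqrt (\<integral>x. (g x)\<^sup>2 \<partial>lborel)"

lemma sqint_mult_integrable:
  assumes "sqint g" "sqint h" shows "integrable lborel (\<lambda>x. g x * h x)"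
proof (rule Bochner_Integration.integrable_bound[where f="\<lambda>x. (g x)\<^sup>2 + (h x)\<^sup>2"])
  show "integrable lborel (\<lambda>x. (g x)\<^sup>2 + (h x)\<^sup>2)" using assms unfolding sqint_def by auto
  show "(\<lambda>x. g x * h x) \<in> borel_measurable lborel" using assms unfolding sqint_def by auto
  show "AE x in lborel. norm (g x * h x) \<le> norm ((g x)\<^sup>2 + (h x)\<^sup>2)"
  proof (intro AE_I2)
    fix x
    have "0 \<le> (\<bar>g x\<bar> - \<bar>h x\<bar>)\<^sup>2" by simp
    then have "2 * (\<bar>g x\<bar> * \<bar>h x\<bar>) \<le> (g x)\<^sup>2 + (h x)\<^sup>2" by (simp add: power2_diff)
    moreover have "0 \<le> \<bar>g x\<bar> * \<bar>h x\<bar>" by simp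
    ultimately have "\<bar>g x * h x\<bar> \<le> (g x)\<^sup>2 + (h x)\<^sup>2" unfolding abs_mult by linarith
    then show "norm (g x * h x) \<le> norm ((g x)\<^sup>2 + (h x)\<^sup>2)" by simp
  qed
qed

lemma sqint_add: "sqint g \<Longrightarrow> sqint h \<Longrightarrow> sqint (\<lambda>x. g x + h x)"
proof -
  assume a: "sqint g" "sqint h"
  have e: "(\<lambda>x. (g x + h x)\<^sup>2) = (\<lambda>x. (g x)\<^sup>2 + 2 * (g x * h x) + (h x)\<^sup>2)"
    by (auto simp: power2_eq_square algebra_simps)
  show ?thesis using a sqint_mult_integrable[OF a] unfolding sqint_def e by auto
qed

lemma sqint_uminus: "sqint g \<Longrightarrow> sqint (\<lambda>x. - g x)"
  unfolding sqint_def by auto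

lemma sqint_diff: "sqint g \<Longrightarrow> sqint h \<Longrightarrow> sqint (\<lambda>x. g x - h x)"
  using sqint_add[of g "\<lambda>x. - h x"] sqint_uminus[of h] by simp

lemma N2_uminus: "N2 (\<lambda>x. - g x) = N2 g" unfolding N2_def by simp

lemma N2_nonneg: "0 \<le> N2 g" unfolding N2_def by simp

lemma le_mult_sqrt_aux:
  fixes I A B :: real
  assumes A: "0 \<le> A" and B: "0 \<le> B" and H: "\<And>c. c > 0 \<Longrightarrow> I \<le> (c * A + B / c) / 2"
  shows "I \<le> sqrt A * sqrt B"
proof (cases "A > 0 \<and> B > 0")
  case True
  have "I \<le> (sqrt B / sqrt A * A + B / (sqrt B / sqrt A)) / 2" using True by (intro H) auto
  also have "\<dots> = sqrt A * sqrt B"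
    using True by (simp add: field_simps)
  finally show ?thesis .
next
  case False
  then have "A = 0 \<or> B = 0" using A B by auto
  then show ?thesis
  proof
    assume A0: "A = 0"
    show ?thesis
    proof (rule ccontr)
      assume "\<not> ?thesis"
      then have I: "I > 0" using A0 by simp
      have p: "0 < B / I + 1" using I B by (smt (verit) divide_nonneg_pos)
      have "I \<le> (B / (B / I + 1)) / 2" using H[OF p] A0 by simp
      also have "\<dots> < I"
      proof -
        have e: "I * (B / I + 1) = B + I" using I by (simp add: field_simps)
        have "B / (B / I + 1) \<le> I" using p I by (simp add: pos_divide_le_eq e)
        moreover have "\<And>x::real. x \<le> I \<Longrightarrow> 0 < I \<Longrightarrow> x / 2 < I" by linarith
        ultimately show ?thesis using I by blast
      qed
      finally show False by simp
    qed
  next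
    assume B0: "B = 0"
    show ?thesis
    proof (rule ccontr)
      assume "\<not> ?thesis"
      then have I: "I > 0" using B0 by simp
      have "I \<le> ((I / (A + 1)) * A) / 2" using H[of "I / (A + 1)"] B0 I A by simp
      also have "\<dots> < I"
      proof -
        have e: "(I / (A + 1)) * A = I * (A / (A + 1))" by simp
        have "A / (A + 1) \<le> 1" using A by simp
        then have "I * (A / (A + 1)) \<le> I * 1" using I by (intro mult_left_mono) auto
        then have "(I / (A + 1)) * A \<le> I" unfolding e by simp
        moreover have "\<And>x::real. x \<le> I \<Longrightarrow> 0 < I \<Longrightarrow> x / 2 < I" by linarith
        ultimately show ?thesis using I by blast
      qed
      finally show False by simp
    qed
  qed
qed

lemma cauchy_schwarz_int:
  assumes "sqint g" "sqint h"
  shows "(\<integral>x. g x * h x \<partial>lborel) \<le> N2 g * N2 h"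
  unfolding N2_def
proof (rule le_mult_sqrt_aux)
  show "0 \<le> (\<integral>x. (g x)\<^sup>2 \<partial>lborel)" "0 \<le> (\<integral>x. (h x)\<^sup>2 \<partial>lborel)" by auto
  fix c :: real assume c: "c > 0"
  have "(\<integral>x. g x * h x \<partial>lborel) \<le> (\<integral>x. (c * (g x)\<^sup>2 + (h x)\<^sup>2 / c) / 2 \<partial>lborel)"
  proof (rule integral_mono)
    show "integrable lborel (\<lambda>x. g x * h x)" by (rule sqint_mult_integrable[OF assms])
    show "integrable lborel (\<lambda>x. (c * (g x)\<^sup>2 + (h x)\<^sup>2 / c) / 2)" using assms unfolding sqint_def by auto
    fix x
    have "0 \<le> (c * g x - h x)\<^sup>2 / c" using c by simp
    also have "(c * g x - h x)\<^sup>2 / c = c * (g x)\<^sup>2 + (h x)\<^sup>2 / c - 2 * (g x * h x)"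
      using c by (simp add: power2_eq_square field_simps)
    finally show "g x * h x \<le> (c * (g x)\<^sup>2 + (h x)\<^sup>2 / c) / 2" by simp
  qed
  also have "\<dots> = (c * (\<integral>x. (g x)\<^sup>2 \<partial>lborel) + (\<integral>x. (h x)\<^sup>2 \<partial>lborel) / c) / 2"
    using assms unfolding sqint_def by simp
  finally show "(\<integral>x. g x * h x \<partial>lborel) \<le> (c * (\<integral>x. (g x)\<^sup>2 \<partial>lborel) + (\<integral>x. (h x)\<^sup>2 \<partial>lborel) / c) / 2" .
qed

lemma N2_triangle:
  assumes "sqint g" "sqint h"
  shows "N2 (\<lambda>x. g x + h x) \<le> N2 g + N2 h"
proof -
  have e: "(\<lambda>x. (g x + h x)\<^sup>2) = (\<lambda>x. (g x)\<^sup>2 + 2 * (g x * h x) + (h x)\<^sup>2)"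
    by (auto simp: power2_eq_square algebra_simps)
  have "(\<integral>x. (g x + h x)\<^sup>2 \<partial>lborel) = (\<integral>x. (g x)\<^sup>2 \<partial>lborel) + 2 * (\<integral>x. g x * h x \<partial>lborel) + (\<integral>x. (h x)\<^sup>2 \<partial>lborel)"
    unfolding e using assms sqint_mult_integrable[OF assms] unfolding sqint_def by simp
  also have "\<dots> \<le> (N2 g)\<^sup>2 + 2 * (N2 g * N2 h) + (N2 h)\<^sup>2"
    using cauchy_schwarz_int[OF assms] unfolding N2_def by simp
  also have "\<dots> = (N2 g + N2 h)\<^sup>2" by (simp add: power2_eq_square algebra_simps)
  finally have le: "(\<integral>x. (g x + h x)\<^sup>2 \<partial>lborel) \<le> (N2 g + N2 h)\<^sup>2" .
  have "N2 (\<lambda>x. g x + h x) \<le> sqrt ((N2 g + N2 h)\<^sup>2)"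
    unfolding N2_def[of "\<lambda>x. g x + h x"] by (rule real_sqrt_le_mono[OF le])
  also have "\<dots> = N2 g + N2 h" using N2_nonneg[of g] N2_nonneg[of h] by simp
  finally show ?thesis .
qed

lemma in_L2_iff: "in_L2 f \<longleftrightarrow> sqint (\<lambda>x. indicator {0..1} x * f x)"
proof -
  have e: "(\<lambda>x. indicator {0..1} x *\<^sub>R (f x)\<^sup>2) = (\<lambda>x. (indicator {0..1} x * f x)\<^sup>2)"
    by (auto simp: indicator_def fun_eq_iff)
  show ?thesis unfolding in_L2_def sqint_def set_borel_measurable_def set_integrable_def e by simp
qed

lemma L2norm_N2: "L2norm f = N2 (\<lambda>x. indicator {0..1} x * f x)"
proof -
  have e: "(\<lambda>x. indicator {0..1} x *\<^sub>R (f x)\<^sup>2) = (\<lambda>x. (indicator {0..1} x * f x)\<^sup>2)"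
    by (auto simp: indicator_def fun_eq_iff)
  show ?thesis unfolding L2norm_def N2_def set_lebesgue_integral_def e ..
qed

lemma in_L2_diff: "in_L2 a \<Longrightarrow> in_L2 b \<Longrightarrow> in_L2 (\<lambda>t. a t - b t)"
  unfolding in_L2_iff right_diff_distrib by (rule sqint_diff)

lemma L2norm_approx:
  assumes "in_L2 p" "in_L2 q" "in_L2 g" "in_L2 f"
  shows "\<bar>L2norm (\<lambda>t. p t - q t) - L2norm (\<lambda>t. g t - f t)\<bar>
           \<le> L2norm (\<lambda>t. g t - p t) + L2norm (\<lambda>t. f t - q t)"
proof -
  define P Q G F where "P = (\<lambda>x. indicator {0..1} x * p x)" and "Q = (\<lambda>x. indicator {0..1} x * q x)"
    and "G = (\<lambda>x. indicator {0..1} x * g x)" and "F = (\<lambda>x. indicator {0..1} x * f x)"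
  have s: "sqint P" "sqint Q" "sqint G" "sqint F" using assms unfolding in_L2_iff P_def Q_def G_def F_def by auto
  have n: "L2norm (\<lambda>t. p t - q t) = N2 (\<lambda>x. P x - Q x)" "L2norm (\<lambda>t. g t - f t) = N2 (\<lambda>x. G x - F x)"
    "L2norm (\<lambda>t. g t - p t) = N2 (\<lambda>x. G x - P x)" "L2norm (\<lambda>t. f t - q t) = N2 (\<lambda>x. F x - Q x)"
    unfolding L2norm_N2 P_def Q_def G_def F_def by (simp_all add: right_diff_distrib)
  have s2a: "sqint (\<lambda>x. P x - Q x)" using s(1,2) by (rule sqint_diff)
  have s2b: "sqint (\<lambda>x. G x - F x)" using s(3,4) by (rule sqint_diff)
  have s2c: "sqint (\<lambda>x. G x - P x)" using s(3,1) by (rule sqint_diff)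
  have s2d: "sqint (\<lambda>x. F x - Q x)" using s(4,2) by (rule sqint_diff)
  have s2e: "sqint (\<lambda>x. - (G x - P x))" using s2c by (rule sqint_uminus)
  have s2f: "sqint (\<lambda>x. - (F x - Q x))" using s2d by (rule sqint_uminus)
  note s2 = s2a s2b s2c s2d s2e s2f
  have 1: "N2 (\<lambda>x. P x - Q x) \<le> N2 (\<lambda>x. G x - F x) + N2 (\<lambda>x. G x - P x) + N2 (\<lambda>x. F x - Q x)"
  proof -
    have "N2 (\<lambda>x. P x - Q x) = N2 (\<lambda>x. (G x - F x) + (- (G x - P x) + (F x - Q x)))"
      by (simp add: algebra_simps)
    also have "\<dots> \<le> N2 (\<lambda>x. G x - F x) + N2 (\<lambda>x. - (G x - P x) + (F x - Q x))"
      using s2 by (intro N2_triangle sqint_add[OF s2e s2d] s2b)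
    also have "N2 (\<lambda>x. - (G x - P x) + (F x - Q x)) \<le> N2 (\<lambda>x. - (G x - P x)) + N2 (\<lambda>x. F x - Q x)"
      using s2 by (intro N2_triangle s2e s2d)
    finally show ?thesis using N2_uminus[of "\<lambda>x. G x - P x"] by simp
  qed
  have 2: "N2 (\<lambda>x. G x - F x) \<le> N2 (\<lambda>x. P x - Q x) + N2 (\<lambda>x. G x - P x) + N2 (\<lambda>x. F x - Q x)"
  proof -
    have "N2 (\<lambda>x. G x - F x) = N2 (\<lambda>x. (P x - Q x) + ((G x - P x) + - (F x - Q x)))"
      by (simp add: algebra_simps)
    also have "\<dots> \<le> N2 (\<lambda>x. P x - Q x) + N2 (\<lambda>x. (G x - P x) + - (F x - Q x))"
      by (intro N2_triangle sqint_add[OF s2c s2f] s2a)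
    also have "N2 (\<lambda>x. (G x - P x) + - (F x - Q x)) \<le> N2 (\<lambda>x. G x - P x) + N2 (\<lambda>x. - (F x - Q x))"
      by (intro N2_triangle s2c s2f)
    finally show ?thesis using N2_uminus[of "\<lambda>x. F x - Q x"] by simp
  qed
  show ?thesis unfolding n using 1 2 by linarith
qed

lemma partition_mono:
  assumes "partition01 n ts" "i < j" "j \<le> n" shows "ts i < ts j"
  using assms(2,3)
proof (induction j)
  case 0 then show ?case by simp
next
  case (Suc j)
  have st: "ts j < ts (Suc j)" using assms(1) Suc.prems unfolding partition01_def by auto
  show ?case
  proof (cases "i = j")
    case True then show ?thesis using st by simp
  next
    case False then have "i < j" using Suc.prems by simp
    then show ?thesis using Suc.IH Suc.prems st by simp
  qed
qed

lemma partition_less_iff: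
  assumes "partition01 n ts" "i \<le> n" "j \<le> n" shows "ts i < ts j \<longleftrightarrow> i < j"
  using partition_mono[OF assms(1)] assms(2,3)
  by (metis less_asym linorder_neqE_nat order_less_irrefl)

lemma partition_le_iff:
  assumes "partition01 n ts" "i \<le> n" "j \<le> n" shows "ts i \<le> ts j \<longleftrightarrow> i \<le> j"
  using partition_less_iff[OF assms(1) assms(3) assms(2)] by (simp add: not_less[symmetric])

lemma partition_range:
  assumes "partition01 n ts" "k \<le> n" shows "0 \<le> ts k" "ts k \<le> 1"
  using partition_le_iff[OF assms(1), of 0 k] partition_le_iff[OF assms(1), of k n] assms
  unfolding partition01_def by auto

definition refines :: "nat \<Rightarrow> (nat \<Rightarrow> real) \<Rightarrow> nat \<Rightarrow> (nat \<Rightarrow> real) \<Rightarrow> bool" where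
  "refines N u n ts \<longleftrightarrow> (\<forall>k\<le>n. \<exists>a\<le>N. ts k = u a)"

lemma exists_interval:
  assumes "partition01 N u" "0 < t" "t \<le> 1"
  shows "\<exists>j<N. u j < t \<and> t \<le> u (Suc j)"
proof -
  have "m \<le> N \<Longrightarrow> t \<le> u m \<Longrightarrow> \<exists>j<m. u j < t \<and> t \<le> u (Suc j)" for m
  proof (induction m)
    case 0 then show ?case using assms unfolding partition01_def by simp
  next
    case (Suc m)
    show ?case
    proof (cases "t \<le> u m")
      case True then show ?thesis using Suc by (metis Suc_leD less_SucI)
    next
      case False then show ?thesis using Suc by auto
    qed
  qed
  then show ?thesis using assms unfolding partition01_def by auto
qed

lemma position:
  assumes "partition01 N u" "j < N" "u j < t" "t \<le> u (Suc j)" "a \<le> N"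
  shows "u a < t \<longleftrightarrow> a \<le> j" "t \<le> u a \<longleftrightarrow> j < a"
proof -
  have "u a < t \<and> \<not> t \<le> u a" if "a \<le> j"
    using partition_le_iff[OF assms(1), of a j] that assms by auto
  moreover have "\<not> u a < t \<and> t \<le> u a" if "j < a"
    using partition_le_iff[OF assms(1), of "Suc j" a] that assms by auto
  ultimately show "u a < t \<longleftrightarrow> a \<le> j" "t \<le> u a \<longleftrightarrow> j < a" by (meson not_less)+
qed

lemma stepfun_refine:
  assumes u: "partition01 N u" and ts: "partition01 n ts" and r: "refines N u n ts"
  shows "stepfun n ts c t = (\<Sum>j<N. stepfun n ts c (u (Suc j)) * indicator {u j<..u (Suc j)} t)"
proof (cases "\<exists>j<N. u j < t \<and> t \<le> u (Suc j)")
  case True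
  then obtain j where j: "j < N" "u j < t" "t \<le> u (Suc j)" by blast
  have uj: "u j < u (Suc j)" using u j unfolding partition01_def by auto
  have "(\<Sum>j'<N. stepfun n ts c (u (Suc j')) * indicator {u j'<..u (Suc j')} t)
      = (\<Sum>j'\<in>{j}. stepfun n ts c (u (Suc j')) * indicator {u j'<..u (Suc j')} t)"
  proof (rule sum.mono_neutral_right)
    show "\<forall>i\<in>{..<N} - {j}. stepfun n ts c (u (Suc i)) * indicator {u i<..u (Suc i)} t = 0"
    proof
      fix i assume i: "i \<in> {..<N} - {j}"
      have iN: "i < N" "i \<noteq> j" using i by auto
      have "t \<notin> {u i<..u (Suc i)}"
      proof (cases "i < j")
        case True
        then have "\<not> t \<le> u (Suc i)" using position(2)[OF u j, of "Suc i"] iN by simp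
        then show ?thesis by simp
      next
        case False
        then have "\<not> u i < t" using position(1)[OF u j, of i] iN by simp
        then show ?thesis by simp
      qed
      then show "stepfun n ts c (u (Suc i)) * indicator {u i<..u (Suc i)} t = 0" by simp
    qed
  qed (use j in simp_all)
  also have "\<dots> = stepfun n ts c (u (Suc j))" using j by simp
  also have "\<dots> = stepfun n ts c t"
    unfolding stepfun_def
  proof (rule sum.cong[OF refl])
    fix k assume k: "k \<in> {..<n}"
    have kn: "k \<le> n" "Suc k \<le> n" using k by auto
    obtain a where a: "a \<le> N" "ts k = u a" using r kn(1) unfolding refines_def by blast
    obtain b where b: "b \<le> N" "ts (Suc k) = u b" using r kn(2) unfolding refines_def by blast
    have p1: "u a < t \<longleftrightarrow> a \<le> j" "t \<le> u b \<longleftrightarrow> j < b"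
      using position[OF u j a(1)] position[OF u j b(1)] by auto
    have p2: "u a < u (Suc j) \<longleftrightarrow> a \<le> j" "u (Suc j) \<le> u b \<longleftrightarrow> j < b"
      using partition_less_iff[OF u a(1), of "Suc j"] partition_le_iff[OF u _ b(1), of "Suc j"] j by auto
    show "c k * indicator {ts k<..ts (Suc k)} (u (Suc j)) = c k * indicator {ts k<..ts (Suc k)} t"
      unfolding a(2) b(2) using p1 p2 by (simp add: indicator_def)
  qed
  finally show ?thesis by simp
next
  case False
  have t: "t \<le> 0 \<or> 1 < t"
  proof (rule ccontr)
    assume "\<not> (t \<le> 0 \<or> 1 < t)"
    then have "0 < t" "t \<le> 1" by auto
    from exists_interval[OF u this] False show False by blast
  qed
  have rhs: "(\<Sum>j<N. stepfun n ts c (u (Suc j)) * indicator {u j<..u (Suc j)} t) = 0"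
    using False by (intro sum.neutral) (auto simp: indicator_def)
  have "stepfun n ts c t = 0"
    unfolding stepfun_def
  proof (intro sum.neutral ballI)
    fix k assume k: "k \<in> {..<n}"
    have "0 \<le> ts k" "ts (Suc k) \<le> 1" using partition_range[OF ts, of k] partition_range[OF ts, of "Suc k"] k by auto
    then have "t \<notin> {ts k<..ts (Suc k)}" using t by auto
    then show "c k * indicator {ts k<..ts (Suc k)} t = 0" by simp
  qed
  then show ?thesis using rhs by simp
qed

lemma stepint_refine:
  assumes u: "partition01 N u" and ts: "partition01 n ts" and r: "refines N u n ts"
  shows "stepint X n ts c \<omega> = (\<Sum>j<N. stepfun n ts c (u (Suc j)) * (X \<omega> (u (Suc j)) - X \<omega> (u j)))"
proof -
  have inc: "X \<omega> (ts (Suc k)) - X \<omega> (ts k)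
      = (\<Sum>j<N. indicator {ts k<..ts (Suc k)} (u (Suc j)) * (X \<omega> (u (Suc j)) - X \<omega> (u j)))"
    if k: "k < n" for k
  proof -
    have kn: "k \<le> n" "Suc k \<le> n" using k by auto
    obtain a where a: "a \<le> N" "ts k = u a" using r kn(1) unfolding refines_def by blast
    obtain b where b: "b \<le> N" "ts (Suc k) = u b" using r kn(2) unfolding refines_def by blast
    have ab: "a < b" using partition_less_iff[OF u a(1) b(1)] a b ts k unfolding partition01_def by auto
    have ind: "indicator {ts k<..ts (Suc k)} (u (Suc j)) = (if j \<in> {a..<b} then 1 else 0 :: real)"
      if j: "j < N" for j
      using partition_less_iff[OF u a(1), of "Suc j"] partition_le_iff[OF u _ b(1), of "Suc j"] j
      unfolding a(2) b(2) by (auto simp: indicator_def)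
    have "(\<Sum>j<N. indicator {ts k<..ts (Suc k)} (u (Suc j)) * (X \<omega> (u (Suc j)) - X \<omega> (u j)))
        = (\<Sum>j<N. (if j \<in> {a..<b} then X \<omega> (u (Suc j)) - X \<omega> (u j) else 0))"
      by (intro sum.cong) (auto simp: ind)
    also have "\<dots> = (\<Sum>j\<in>{..<N} \<inter> {a..<b}. X \<omega> (u (Suc j)) - X \<omega> (u j))"
      by (simp add: sum.inter_restrict)
    also have "{..<N} \<inter> {a..<b} = {a..<b}" using b by auto
    also have "(\<Sum>j=a..<b. X \<omega> (u (Suc j)) - X \<omega> (u j)) = X \<omega> (u b) - X \<omega> (u a)"
      using ab by (intro sum_Suc_diff') simp
    finally show ?thesis using a b by simp
  qed
  have "stepint X n ts c \<omega>
      = (\<Sum>k<n. c k * (\<Sum>j<N. indicator {ts k<..ts (Suc k)} (u (Suc j)) * (X \<omega> (u (Suc j)) - X \<omega> (u j))))"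
    unfolding stepint_def by (intro sum.cong) (auto simp: inc)
  also have "\<dots> = (\<Sum>k<n. \<Sum>j<N. c k * indicator {ts k<..ts (Suc k)} (u (Suc j)) * (X \<omega> (u (Suc j)) - X \<omega> (u j)))"
    by (simp only: sum_distrib_left mult.assoc)
  also have "\<dots> = (\<Sum>j<N. \<Sum>k<n. c k * indicator {ts k<..ts (Suc k)} (u (Suc j)) * (X \<omega> (u (Suc j)) - X \<omega> (u j)))"
    by (rule sum.swap)
  also have "\<dots> = (\<Sum>j<N. (\<Sum>k<n. c k * indicator {ts k<..ts (Suc k)} (u (Suc j))) * (X \<omega> (u (Suc j)) - X \<omega> (u j)))"
    by (simp only: sum_distrib_right)
  finally show ?thesis unfolding stepfun_def .
qed

lemma common_refinement:
  assumes ts: "partition01 n ts" and ts': "partition01 n' ts'"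
  shows "\<exists>N u. partition01 N u \<and> refines N u n ts \<and> refines N u n' ts'"
proof -
  define U where "U = ts ` {..n} \<union> ts' ` {..n'}"
  have fin: "finite U" unfolding U_def by simp
  have U01: "x \<in> U \<Longrightarrow> 0 \<le> x \<and> x \<le> 1" for x
    unfolding U_def using partition_range[OF ts] partition_range[OF ts'] by auto
  have U0: "0 \<in> U" and U1: "1 \<in> U" using ts unfolding U_def partition01_def by force+
  define xs where "xs = sorted_list_of_set U"
  have xs: "sorted_wrt (<) xs" "set xs = U" "length xs = card U"
    using fin unfolding xs_def by simp_all
  have "card U \<ge> 2"
  proof -
    have "{0, 1} \<subseteq> U" using U0 U1 by auto
    from card_mono[OF fin this] show ?thesis by simp
  qed
  define N where "N = length xs - 1"
  define u where "u = (\<lambda>j. xs ! j)"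
  have lenN: "length xs = Suc N" using xs(3) \<open>card U \<ge> 2\<close> unfolding N_def by simp
  have lt: "i < j \<Longrightarrow> j \<le> N \<Longrightarrow> u i < u j" for i j
    unfolding u_def using sorted_wrt_nth_less[OF xs(1)] lenN by simp
  have inU: "j \<le> N \<Longrightarrow> u j \<in> U" for j using xs(2) lenN unfolding u_def by (metis le_imp_less_Suc nth_mem)
  have u0: "u 0 = 0"
  proof -
    obtain i where i: "i < length xs" "xs ! i = 0" using U0 xs(2) by (metis in_set_conv_nth)
    show ?thesis
    proof (cases "i = 0")
      case True then show ?thesis using i unfolding u_def by simp
    next
      case False
      then have "u 0 < u i" using lt[of 0 i] i lenN by simp
      then show ?thesis using i U01[OF inU[of 0]] unfolding u_def by simp
    qed
  qed
  have uN: "u N = 1"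
  proof -
    obtain i where i: "i < length xs" "xs ! i = 1" using U1 xs(2) by (metis in_set_conv_nth)
    show ?thesis
    proof (cases "i = N")
      case True then show ?thesis using i unfolding u_def by simp
    next
      case False
      then have "u i < u N" using lt[of i N] i lenN by simp
      then show ?thesis using i U01[OF inU[of N]] unfolding u_def by simp
    qed
  qed
  have p: "partition01 N u" unfolding partition01_def using u0 uN lt by auto
  have ref: "x \<in> U \<Longrightarrow> \<exists>a\<le>N. x = u a" for x
    using xs(2) lenN unfolding u_def by (metis in_set_conv_nth less_Suc_eq_le)
  have "refines N u n ts" unfolding refines_def using ref U_def by auto
  moreover have "refines N u n' ts'" unfolding refines_def using ref U_def by auto
  ultimately show ?thesis using p by blast
qed

lemma ind_sum_single:
  assumes u: "partition01 N u" and j: "j < N" "u j < t" "t \<le> u (Suc j)"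
  shows "(\<Sum>i<N. f i * indicator {u i<..u (Suc i)} t) = (f j :: real)"
proof -
  have "(\<Sum>i<N. f i * indicator {u i<..u (Suc i)} t) = (\<Sum>i\<in>{j}. f i * indicator {u i<..u (Suc i)} t)"
  proof (rule sum.mono_neutral_right)
    show "\<forall>i\<in>{..<N} - {j}. f i * indicator {u i<..u (Suc i)} t = 0"
    proof
      fix i assume i: "i \<in> {..<N} - {j}"
      have iN: "i < N" "i \<noteq> j" using i by auto
      have "t \<notin> {u i<..u (Suc i)}"
      proof (cases "i < j")
        case True
        then have "\<not> t \<le> u (Suc i)" using position(2)[OF u j, of "Suc i"] iN by simp
        then show ?thesis by simp
      next
        case False
        then have "\<not> u i < t" using position(1)[OF u j, of i] iN by simp
        then show ?thesis by simp
      qed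
      then show "f i * indicator {u i<..u (Suc i)} t = 0" by simp
    qed
  qed (use j in simp_all)
  then show ?thesis using j by simp
qed

lemma ind_sum_none:
  assumes "\<not> (\<exists>j<N. u j < t \<and> t \<le> u (Suc j))"
  shows "(\<Sum>i<N. f i * indicator {u i<..u (Suc i)} t) = (0::real)"
  using assms by (intro sum.neutral) (auto simp: indicator_def)

lemma ind_sum_square:
  assumes u: "partition01 N u"
  shows "(\<Sum>i<N. f i * indicator {u i<..u (Suc i)} t)\<^sup>2 = (\<Sum>i<N. (f i)\<^sup>2 * indicator {u i<..u (Suc i)} t :: real)"
proof (cases "\<exists>j<N. u j < t \<and> t \<le> u (Suc j)")
  case True
  then obtain j where j: "j < N" "u j < t" "t \<le> u (Suc j)" by blast
  show ?thesis using ind_sum_single[OF u j, of f] ind_sum_single[OF u j, of "\<lambda>i. (f i)\<^sup>2"] by simp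
next
  case False
  show ?thesis using ind_sum_none[OF False, of f] ind_sum_none[OF False, of "\<lambda>i. (f i)\<^sup>2"] by simp
qed

lemma L2norm_indsum:
  assumes u: "partition01 N u"
  shows "L2norm (\<lambda>t. \<Sum>i<N. f i * indicator {u i<..u (Suc i)} t) = sqrt (\<Sum>i<N. (f i)\<^sup>2 * (u (Suc i) - u i))"
proof -
  have sub: "{u i<..u (Suc i)} \<subseteq> {0..1}" if "i < N" for i
    using partition_range[OF u, of i] partition_range[OF u, of "Suc i"] that by auto
  have lt: "u i < u (Suc i)" if "i < N" for i using u that unfolding partition01_def by auto
  have e: "indicator {0..1} t *\<^sub>R (\<Sum>i<N. f i * indicator {u i<..u (Suc i)} t)\<^sup>2
      = (\<Sum>i<N. (f i)\<^sup>2 * indicator {u i<..u (Suc i)} t)" for t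
  proof -
    have "indicator {0..1} t * (\<Sum>i<N. (f i)\<^sup>2 * indicator {u i<..u (Suc i)} t)
        = (\<Sum>i<N. (f i)\<^sup>2 * indicator {u i<..u (Suc i)} t)"
    proof (cases "t \<in> {0..1}")
      case False
      then have nt: "\<forall>i\<in>{..<N}. t \<notin> {u i<..u (Suc i)}" using sub by blast
      have "(\<Sum>i<N. (f i)\<^sup>2 * indicator {u i<..u (Suc i)} t) = 0"
        using nt by (intro sum.neutral) simp
      then show ?thesis using False by simp
    qed simp
    then show ?thesis using ind_sum_square[OF u, of f t] by simp
  qed
  have "(LINT t:{0..1}|lborel. (\<Sum>i<N. f i * indicator {u i<..u (Suc i)} t)\<^sup>2)
      = (\<integral>t. (\<Sum>i<N. (f i)\<^sup>2 * indicator {u i<..u (Suc i)} t) \<partial>lborel)"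
    unfolding set_lebesgue_integral_def e ..
  also have "\<dots> = (\<Sum>i<N. (f i)\<^sup>2 * (u (Suc i) - u i))"
  proof -
    have "(\<integral>t. (\<Sum>i<N. (f i)\<^sup>2 * indicator {u i<..u (Suc i)} t) \<partial>lborel)
        = (\<Sum>i<N. \<integral>t. (f i)\<^sup>2 * indicator {u i<..u (Suc i)} t \<partial>lborel)"
      using lt by (intro Bochner_Integration.integral_sum) (auto simp: integrable_indicator_iff less_imp_le)
    also have "\<dots> = (\<Sum>i<N. (f i)\<^sup>2 * (u (Suc i) - u i))"
      using lt by (intro sum.cong refl) (simp add: less_imp_le)
    finally show ?thesis .
  qed
  finally show ?thesis unfolding L2norm_def by simp
qed

lemma stepdiff_repr:
  fixes c c' :: "nat \<Rightarrow> real"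
  assumes u: "partition01 N u" and ts: "partition01 n ts" "refines N u n ts"
    and ts': "partition01 n' ts'" "refines N u n' ts'"
  defines "e \<equiv> \<lambda>j. stepfun n ts c (u (Suc j)) - stepfun n' ts' c' (u (Suc j))"
  shows "stepint X n ts c \<omega> - stepint X n' ts' c' \<omega> = (\<Sum>j<N. e j * (X \<omega> (u (Suc j)) - X \<omega> (u j)))"
    and "(\<lambda>t. stepfun n ts c t - stepfun n' ts' c' t) = (\<lambda>t. \<Sum>j<N. e j * indicator {u j<..u (Suc j)} t)"
proof -
  show "stepint X n ts c \<omega> - stepint X n' ts' c' \<omega> = (\<Sum>j<N. e j * (X \<omega> (u (Suc j)) - X \<omega> (u j)))"
    unfolding stepint_refine[OF u ts] stepint_refine[OF u ts'] e_def
    by (simp only: sum_subtractf[symmetric] left_diff_distrib)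
  show "(\<lambda>t. stepfun n ts c t - stepfun n' ts' c' t) = (\<lambda>t. \<Sum>j<N. e j * indicator {u j<..u (Suc j)} t)"
  proof
    fix t show "stepfun n ts c t - stepfun n' ts' c' t = (\<Sum>j<N. e j * indicator {u j<..u (Suc j)} t)"
      unfolding stepfun_refine[OF u ts, of c t] stepfun_refine[OF u ts', of c' t] e_def
      by (simp only: sum_subtractf[symmetric] left_diff_distrib)
  qed
qed

lemma (in prob_space) stepdiff_mgf:
  assumes W: "std_wiener M X" and ts: "partition01 n ts" and ts': "partition01 n' ts'"
    and l: "2 * l * (L2norm (\<lambda>t. stepfun n ts c t - stepfun n' ts' c' t))\<^sup>2 < 1"
  shows "(\<integral>\<^sup>+\<omega>. ennreal (exp (l * (stepint X n ts c \<omega> - stepint X n' ts' c' \<omega>)\<^sup>2)) \<partial>M)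
       = ennreal (1 / sqrt (1 - 2 * l * (L2norm (\<lambda>t. stepfun n ts c t - stepfun n' ts' c' t))\<^sup>2))"
proof -
  obtain N u where u: "partition01 N u" "refines N u n ts" "refines N u n' ts'"
    using common_refinement[OF ts ts'] by blast
  define e where "e = (\<lambda>j. stepfun n ts c (u (Suc j)) - stepfun n' ts' c' (u (Suc j)))"
  define D where "D = (\<lambda>j \<omega>. X \<omega> (u (Suc j)) - X \<omega> (u j))"
  define \<sigma> where "\<sigma> = L2norm (\<lambda>t. stepfun n ts c t - stepfun n' ts' c' t)"
  have S: "stepint X n ts c \<omega> - stepint X n' ts' c' \<omega> = (\<Sum>j<N. e j * D j \<omega>)" for \<omega>
    unfolding e_def D_def by (rule stepdiff_repr(1)[OF u(1) ts u(2) ts' u(3)])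
  have sig: "\<sigma> = sqrt (\<Sum>j<N. (e j)\<^sup>2 * (u (Suc j) - u j))"
    unfolding \<sigma>_def stepdiff_repr(2)[OF u(1) ts u(2) ts' u(3)] e_def by (rule L2norm_indsum[OF u(1)])
  have lt: "u j < u (Suc j)" if "j < N" for j using u(1) that unfolding partition01_def by auto
  have r01: "0 \<le> u j" "u j \<le> 1" if "j \<le> N" for j using partition_range[OF u(1) that] by auto
  have ind: "indep_vars (\<lambda>_. borel) D {..<N}"
    using W u(1) unfolding std_wiener_def partition01_def D_def by auto
  have dist: "distributed M lborel (D j) (normal_density 0 (sqrt (u (Suc j) - u j)))" if "j < N" for j
  proof -
    have "0 \<le> u j" "u j < u (Suc j)" "u (Suc j) \<le> 1" using r01[of j] r01[of "Suc j"] lt[OF that] that by auto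
    then show ?thesis using W unfolding std_wiener_def D_def by blast
  qed
  define J where "J = {j\<in>{..<N}. e j \<noteq> 0}"
  have SJ: "(\<Sum>j<N. e j * D j \<omega>) = (\<Sum>j\<in>J. e j * D j \<omega>)" for \<omega>
    unfolding J_def by (rule sum.mono_neutral_right) auto
  have sigJ: "(\<Sum>j<N. (e j)\<^sup>2 * (u (Suc j) - u j)) = (\<Sum>j\<in>J. (e j)\<^sup>2 * (u (Suc j) - u j))"
    unfolding J_def by (rule sum.mono_neutral_right) auto
  show ?thesis
  proof (cases "J = {}")
    case True
    then have s0: "\<sigma> = 0" unfolding sig sigJ by simp
    have "(\<integral>\<^sup>+\<omega>. ennreal (exp (l * (stepint X n ts c \<omega> - stepint X n' ts' c' \<omega>)\<^sup>2)) \<partial>M) = (\<integral>\<^sup>+\<omega>. 1 \<partial>M)"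
      unfolding S SJ True by simp
    also have "\<dots> = 1" by (simp add: emeasure_space_1)
    finally show ?thesis using s0 unfolding \<sigma>_def by simp
  next
    case False
    have finJ: "finite J" unfolding J_def by simp
    have pos: "0 < \<bar>e j\<bar> * sqrt (u (Suc j) - u j)" if "j \<in> J" for j
      using that lt unfolding J_def by auto
    have dj: "distributed M lborel (\<lambda>\<omega>. e j * D j \<omega>) (normal_density 0 (\<bar>e j\<bar> * sqrt (u (Suc j) - u j)))"
      if "j \<in> J" for j
    proof -
      have jN: "j < N" "e j \<noteq> 0" using that unfolding J_def by auto
      have "distributed M lborel (\<lambda>\<omega>. 0 + e j * D j \<omega>) (normal_density (0 + e j * 0) (\<bar>e j\<bar> * sqrt (u (Suc j) - u j)))"
        using jN lt[OF jN(1)] by (intro normal_density_affine dist) auto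
      then show ?thesis by simp
    qed
    have indJ: "indep_vars (\<lambda>_. borel) (\<lambda>j \<omega>. e j * D j \<omega>) J"
    proof -
      have "indep_vars (\<lambda>_. borel) D J" by (rule indep_vars_subset[OF ind]) (auto simp: J_def)
      then show ?thesis by (rule indep_vars_compose2[where Y="\<lambda>j x. e j * x"]) simp
    qed
    have dS: "distributed M lborel (\<lambda>\<omega>. \<Sum>j\<in>J. e j * D j \<omega>)
        (normal_density (\<Sum>j\<in>J. 0) (sqrt (\<Sum>j\<in>J. (\<bar>e j\<bar> * sqrt (u (Suc j) - u j))\<^sup>2)))"
      by (rule sum_indep_normal[OF finJ False indJ pos dj])
    have sq: "(\<Sum>j\<in>J. (\<bar>e j\<bar> * sqrt (u (Suc j) - u j))\<^sup>2) = (\<Sum>j\<in>J. (e j)\<^sup>2 * (u (Suc j) - u j))"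
      using lt unfolding J_def by (intro sum.cong refl) (auto simp: power_mult_distrib intro: less_imp_le)
    have dS': "distributed M lborel (\<lambda>\<omega>. \<Sum>j\<in>J. e j * D j \<omega>) (normal_density 0 \<sigma>)"
      using dS unfolding sq sig sigJ by simp
    have spos: "0 < \<sigma>"
    proof -
      obtain j where "j \<in> J" using False by blast
      then have "0 < (\<Sum>j\<in>J. (e j)\<^sup>2 * (u (Suc j) - u j))"
        using lt finJ False unfolding J_def by (intro sum_pos) auto
      then show ?thesis unfolding sig sigJ by simp
    qed
    have "(\<integral>\<^sup>+\<omega>. ennreal (exp (l * (stepint X n ts c \<omega> - stepint X n' ts' c' \<omega>)\<^sup>2)) \<partial>M)
        = (\<integral>\<^sup>+\<omega>. ennreal (exp (l * (\<Sum>j\<in>J. e j * D j \<omega>)\<^sup>2)) \<partial>M)"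
      unfolding S SJ ..
    also have "\<dots> = ennreal (1 / sqrt (1 - 2 * l * \<sigma>\<^sup>2))"
      using l unfolding \<sigma>_def[symmetric] by (intro gauss_mgf[OF dS' spos])
    finally show ?thesis unfolding \<sigma>_def .
  qed
qed

lemma stepfun_sum: "stepfun n ts c t = (\<Sum>k<n. c k * indicator {ts k<..ts (Suc k)} t)"
  unfolding stepfun_def ..

lemma stepfun_in_L2:
  assumes ts: "partition01 n ts"
  shows "in_L2 (stepfun n ts c)"
proof -
  have sub: "{ts k<..ts (Suc k)} \<subseteq> {0..1}" if "k < n" for k
    using partition_range[OF ts, of k] partition_range[OF ts, of "Suc k"] that by auto
  have lt: "ts k < ts (Suc k)" if "k < n" for k using ts that unfolding partition01_def by auto
  have e: "indicator {0..1} t * stepfun n ts c t = stepfun n ts c t" for t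
  proof (cases "t \<in> {0..1}")
    case False
    then have nt: "\<forall>k\<in>{..<n}. t \<notin> {ts k<..ts (Suc k)}" using sub by blast
    have "stepfun n ts c t = 0" unfolding stepfun_sum using nt by (intro sum.neutral) simp
    then show ?thesis by simp
  qed simp
  have sq: "(stepfun n ts c t)\<^sup>2 = (\<Sum>k<n. (c k)\<^sup>2 * indicator {ts k<..ts (Suc k)} t)" for t
    unfolding stepfun_sum by (rule ind_sum_square[OF ts])
  have "sqint (stepfun n ts c)"
    unfolding sqint_def sq
  proof
    show "stepfun n ts c \<in> borel_measurable lborel" unfolding stepfun_def by measurable
    show "integrable lborel (\<lambda>x. \<Sum>k<n. (c k)\<^sup>2 * indicator {ts k<..ts (Suc k)} x)"
      using lt by (intro Bochner_Integration.integrable_sum) (auto simp: integrable_indicator_iff less_imp_le)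
  qed
  then show ?thesis unfolding in_L2_iff e .
qed

lemma stepint_measurable_Pi:
  assumes ts: "partition01 n ts"
  shows "(\<lambda>w. stepint (\<lambda>w. w) n ts c w) \<in> borel_measurable (Pi\<^sub>M {0..1} (\<lambda>_. borel))"
proof -
  have r: "ts k \<in> {0..1}" if "k \<le> n" for k using partition_range[OF ts that] by auto
  show ?thesis unfolding stepint_def
  proof (intro borel_measurable_sum borel_measurable_times borel_measurable_diff borel_measurable_const)
    fix k assume "k \<in> {..<n}"
    then have "ts k \<in> {0..1}" "ts (Suc k) \<in> {0..1}" using r by auto
    then show "(\<lambda>w. w (ts (Suc k))) \<in> borel_measurable (Pi\<^sub>M {0..1} (\<lambda>_. borel))"
      "(\<lambda>w. w (ts k)) \<in> borel_measurable (Pi\<^sub>M {0..1} (\<lambda>_. borel))"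
      by (auto intro: measurable_component_singleton)
  qed
qed

lemma stepint_restrict:
  assumes ts: "partition01 n ts"
  shows "stepint (\<lambda>w. w) n ts c (restrict (X \<omega>) {0..1}) = stepint X n ts c \<omega>"
proof -
  have r: "ts k \<in> {0..1}" if "k \<le> n" for k using partition_range[OF ts that] by auto
  show ?thesis unfolding stepint_def using r by (intro sum.cong) auto
qed

lemma stepint_measurable:
  assumes W: "std_wiener M X" and ts: "partition01 n ts"
  shows "stepint X n ts c \<in> borel_measurable M"
proof -
  have r: "ts k \<in> {0..1}" if "k \<le> n" for k using partition_range[OF ts that] by auto
  have m: "t \<in> {0..1} \<Longrightarrow> (\<lambda>\<omega>. X \<omega> t) \<in> borel_measurable M" for t using W unfolding std_wiener_def by auto
  show ?thesis unfolding stepint_def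
  proof (intro borel_measurable_sum borel_measurable_times borel_measurable_diff borel_measurable_const)
    fix k assume "k \<in> {..<n}"
    then show "(\<lambda>\<omega>. X \<omega> (ts (Suc k))) \<in> borel_measurable M" "(\<lambda>\<omega>. X \<omega> (ts k)) \<in> borel_measurable M"
      using r m by auto
  qed
qed

lemma tendsto_by_bound:
  fixes x :: "nat \<Rightarrow> real"
  assumes "\<And>m. \<bar>x m - s\<bar> \<le> a m" "a \<longlonglongrightarrow> 0"
  shows "x \<longlonglongrightarrow> s"
proof -
  have "(\<lambda>m. x m - s) \<longlonglongrightarrow> 0"
    by (rule Lim_null_comparison[OF _ assms(2)]) (use assms(1) in simp)
  then show ?thesis by (simp add: LIM_zero_iff)
qed

lemma ae_subseq:
  fixes h :: "nat \<Rightarrow> 'a \<Rightarrow> real"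
  assumes meas: "\<And>m. h m \<in> borel_measurable M" and nn: "\<And>m \<omega>. 0 \<le> h m \<omega>"
    and lim: "(\<lambda>m. \<integral>\<^sup>+\<omega>. ennreal (h m \<omega>) \<partial>M) \<longlonglongrightarrow> 0"
  shows "\<exists>r. filterlim r sequentially sequentially \<and> (AE \<omega> in M. (\<lambda>k. h (r k) \<omega>) \<longlonglongrightarrow> 0)"
proof -
  have "\<forall>k. \<exists>N. \<forall>m\<ge>N. (\<integral>\<^sup>+\<omega>. ennreal (h m \<omega>) \<partial>M) < ennreal ((1/2)^k)"
  proof
    fix k :: nat
    have "eventually (\<lambda>m. (\<integral>\<^sup>+\<omega>. ennreal (h m \<omega>) \<partial>M) < ennreal ((1/2)^k)) sequentially"
      by (rule order_tendstoD(2)[OF lim]) simp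
    then show "\<exists>N. \<forall>m\<ge>N. (\<integral>\<^sup>+\<omega>. ennreal (h m \<omega>) \<partial>M) < ennreal ((1/2)^k)"
      by (simp add: eventually_sequentially)
  qed
  then obtain N where N: "\<And>k m. m \<ge> N k \<Longrightarrow> (\<integral>\<^sup>+\<omega>. ennreal (h m \<omega>) \<partial>M) < ennreal ((1/2)^k)"
    by metis
  define r where "r = (\<lambda>k. N k + k)"
  have rk: "(\<integral>\<^sup>+\<omega>. ennreal (h (r k) \<omega>) \<partial>M) \<le> ennreal ((1/2)^k)" for k
    using N[of k "r k"] unfolding r_def by simp
  have fl: "filterlim r sequentially sequentially"
    unfolding filterlim_at_top eventually_sequentially r_def by (metis le_add2 order_trans)
  have "(\<integral>\<^sup>+\<omega>. (\<Sum>k. ennreal (h (r k) \<omega>)) \<partial>M) = (\<Sum>k. \<integral>\<^sup>+\<omega>. ennreal (h (r k) \<omega>) \<partial>M)"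
    using meas by (intro nn_integral_suminf) auto
  also have "\<dots> \<le> (\<Sum>k. ennreal ((1/2)^k))" by (intro suminf_le rk) auto
  also have "\<dots> = ennreal (\<Sum>k. (1/2)^k)"
    by (intro suminf_ennreal2) (auto simp: summable_geometric)
  also have "\<dots> < \<top>" by simp
  finally have fin: "(\<integral>\<^sup>+\<omega>. (\<Sum>k. ennreal (h (r k) \<omega>)) \<partial>M) \<noteq> \<top>" by simp
  have fin2: "integral\<^sup>N M (\<lambda>\<omega>. \<Sum>k. ennreal (h (r k) \<omega>)) \<noteq> \<infinity>" using fin by simp
  have "AE \<omega> in M. (\<Sum>k. ennreal (h (r k) \<omega>)) \<noteq> \<infinity>"
    by (rule nn_integral_PInf_AE[OF _ fin2]) (use meas in auto)
  then have "AE \<omega> in M. (\<lambda>k. h (r k) \<omega>) \<longlonglongrightarrow> 0"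
  proof (rule AE_mp, intro AE_I2 impI)
    fix \<omega> assume "(\<Sum>k. ennreal (h (r k) \<omega>)) \<noteq> \<infinity>"
    then have "(\<Sum>k. ennreal (h (r k) \<omega>)) \<noteq> \<top>" by simp
    then have "summable (\<lambda>k. h (r k) \<omega>)" by (intro summable_suminf_not_top) (use nn in auto)
    then show "(\<lambda>k. h (r k) \<omega>) \<longlonglongrightarrow> 0" by (rule summable_LIMSEQ_zero)
  qed
  then show ?thesis using fl by blast
qed

lemma (in prob_space) indep_mgf_step:
  fixes W :: "'d::finite \<Rightarrow> 'a \<Rightarrow> real \<Rightarrow> real"
  assumes W: "\<forall>i. std_wiener M (W i)"
    and ind: "indep_vars (\<lambda>_. Pi\<^sub>M {0..1} (\<lambda>_. borel)) (\<lambda>i \<omega>. restrict (W i \<omega>) {0..1}) UNIV"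
    and pg: "\<And>i. partition01 (ng i) (tsg i)" and pf: "\<And>i. partition01 (nf i) (tsf i)"
    and l: "\<And>i. 2 * l * (L2norm (\<lambda>t. stepfun (ng i) (tsg i) (cg i) t - stepfun (nf i) (tsf i) (cf i) t))\<^sup>2 < 1"
  shows "(\<integral>\<^sup>+\<omega>. ennreal (exp (l * (\<Sum>i\<in>UNIV. (stepint (W i) (ng i) (tsg i) (cg i) \<omega> - stepint (W i) (nf i) (tsf i) (cf i) \<omega>)\<^sup>2))) \<partial>M)
       = ennreal (\<Prod>i\<in>UNIV. 1 / sqrt (1 - 2 * l * (L2norm (\<lambda>t. stepfun (ng i) (tsg i) (cg i) t - stepfun (nf i) (tsf i) (cf i) t))\<^sup>2))"
proof -
  define S where "S = (\<lambda>i \<omega>. stepint (W i) (ng i) (tsg i) (cg i) \<omega> - stepint (W i) (nf i) (tsf i) (cf i) \<omega>)"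
  define \<sigma> where "\<sigma> = (\<lambda>i. L2norm (\<lambda>t. stepfun (ng i) (tsg i) (cg i) t - stepfun (nf i) (tsf i) (cf i) t))"
  define Y where "Y = (\<lambda>i w. ennreal (exp (l * (stepint (\<lambda>w. w) (ng i) (tsg i) (cg i) w - stepint (\<lambda>w. w) (nf i) (tsf i) (cf i) w)\<^sup>2)))"
  have Ym: "Y i \<in> borel_measurable (Pi\<^sub>M {0..1} (\<lambda>_. borel))" for i
    unfolding Y_def using stepint_measurable_Pi[OF pg[of i], of "cg i"] stepint_measurable_Pi[OF pf[of i], of "cf i"]
    by measurable
  have indY: "indep_vars (\<lambda>_. borel) (\<lambda>i \<omega>. Y i (restrict (W i \<omega>) {0..1})) UNIV"
    by (rule indep_vars_compose2[OF ind]) (rule Ym)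
  have YS: "(\<lambda>i \<omega>. Y i (restrict (W i \<omega>) {0..1})) = (\<lambda>i \<omega>. ennreal (exp (l * (S i \<omega>)\<^sup>2)))"
    unfolding Y_def S_def by (intro ext) (simp add: stepint_restrict[OF pg] stepint_restrict[OF pf])
  have "(\<integral>\<^sup>+\<omega>. ennreal (exp (l * (\<Sum>i\<in>UNIV. (S i \<omega>)\<^sup>2))) \<partial>M) = (\<integral>\<^sup>+\<omega>. (\<Prod>i\<in>UNIV. ennreal (exp (l * (S i \<omega>)\<^sup>2))) \<partial>M)"
    by (intro nn_integral_cong) (simp add: sum_distrib_left exp_sum prod_ennreal)
  also have "\<dots> = (\<Prod>i\<in>UNIV. \<integral>\<^sup>+\<omega>. ennreal (exp (l * (S i \<omega>)\<^sup>2)) \<partial>M)"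
    using indY unfolding YS by (intro indep_vars_nn_integral) auto
  also have "\<dots> = (\<Prod>i\<in>UNIV. ennreal (1 / sqrt (1 - 2 * l * (\<sigma> i)\<^sup>2)))"
    unfolding S_def \<sigma>_def by (intro prod.cong refl stepdiff_mgf W[rule_format] pg pf l)
  also have "\<dots> = ennreal (\<Prod>i\<in>UNIV. 1 / sqrt (1 - 2 * l * (\<sigma> i)\<^sup>2))"
    using l unfolding \<sigma>_def by (intro prod_ennreal) (simp add: less_imp_le)
  finally show ?thesis unfolding S_def \<sigma>_def .
qed

lemma wi_choice:
  assumes "\<forall>i. wiener_integral M (X i) f (Y i)"
  shows "\<exists>n ts c. \<forall>i. Y i \<in> borel_measurable M \<and> (\<forall>m. partition01 (n i m) (ts i m))
      \<and> (\<lambda>m. L2norm (\<lambda>t. f t - stepfun (n i m) (ts i m) (c i m) t)) \<longlonglongrightarrow> 0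
      \<and> (\<lambda>m. \<integral>\<^sup>+ \<omega>. ennreal ((Y i \<omega> - stepint (X i) (n i m) (ts i m) (c i m) \<omega>)\<^sup>2) \<partial>M) \<longlonglongrightarrow> 0"
proof -
  have "\<forall>i. \<exists>p. Y i \<in> borel_measurable M \<and> (\<forall>m. partition01 (fst p m) (fst (snd p) m))
      \<and> (\<lambda>m. L2norm (\<lambda>t. f t - stepfun (fst p m) (fst (snd p) m) (snd (snd p) m) t)) \<longlonglongrightarrow> 0
      \<and> (\<lambda>m. \<integral>\<^sup>+ \<omega>. ennreal ((Y i \<omega> - stepint (X i) (fst p m) (fst (snd p) m) (snd (snd p) m) \<omega>)\<^sup>2) \<partial>M) \<longlonglongrightarrow> 0"
  proof
    fix i
    have "wiener_integral M (X i) f (Y i)" using assms by blast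
    then obtain n ts c where "Y i \<in> borel_measurable M" "\<forall>m. partition01 (n m) (ts m)"
      "(\<lambda>m. L2norm (\<lambda>t. f t - stepfun (n m) (ts m) (c m) t)) \<longlonglongrightarrow> 0"
      "(\<lambda>m. \<integral>\<^sup>+ \<omega>. ennreal ((Y i \<omega> - stepint (X i) (n m) (ts m) (c m) \<omega>)\<^sup>2) \<partial>M) \<longlonglongrightarrow> 0"
      unfolding wiener_integral_def by (elim conjE exE)
    then show "\<exists>p. Y i \<in> borel_measurable M \<and> (\<forall>m. partition01 (fst p m) (fst (snd p) m))
      \<and> (\<lambda>m. L2norm (\<lambda>t. f t - stepfun (fst p m) (fst (snd p) m) (snd (snd p) m) t)) \<longlonglongrightarrow> 0
      \<and> (\<lambda>m. \<integral>\<^sup>+ \<omega>. ennreal ((Y i \<omega> - stepint (X i) (fst p m) (fst (snd p) m) (snd (snd p) m) \<omega>)\<^sup>2) \<partial>M) \<longlonglongrightarrow> 0"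
      by (intro exI[of _ "(n, ts, c)"]) simp
  qed
  then obtain p where p: "\<forall>i. Y i \<in> borel_measurable M \<and> (\<forall>m. partition01 (fst (p i) m) (fst (snd (p i)) m))
      \<and> (\<lambda>m. L2norm (\<lambda>t. f t - stepfun (fst (p i) m) (fst (snd (p i)) m) (snd (snd (p i)) m) t)) \<longlonglongrightarrow> 0
      \<and> (\<lambda>m. \<integral>\<^sup>+ \<omega>. ennreal ((Y i \<omega> - stepint (X i) (fst (p i) m) (fst (snd (p i)) m) (snd (snd (p i)) m) \<omega>)\<^sup>2) \<partial>M) \<longlonglongrightarrow> 0"
    by (rule choice[THEN exE])
  show ?thesis
    by (rule exI[of _ "\<lambda>i. fst (p i)"], rule exI[of _ "\<lambda>i. fst (snd (p i))"], rule exI[of _ "\<lambda>i. snd (snd (p i))"])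
      (rule p)
qed

lemma sq_diff_le: "((a::real) - b)\<^sup>2 \<le> 2 * a\<^sup>2 + 2 * b\<^sup>2"
proof -
  have "0 \<le> (a + b)\<^sup>2" by simp
  then show ?thesis by (simp add: power2_eq_square algebra_simps)
qed

lemma abs_le_sqrt_of_sq: "(x::real)\<^sup>2 \<le> e \<Longrightarrow> \<bar>x\<bar> \<le> sqrt e"
  using real_sqrt_le_mono[of "x\<^sup>2" e] by simp

lemma (in prob_space) mgf_bound:
  fixes W :: "'d::finite \<Rightarrow> 'a \<Rightarrow> real \<Rightarrow> real" and Yg Yf :: "'d \<Rightarrow> 'a \<Rightarrow> real"
  assumes W: "\<forall>i. std_wiener M (W i)"
    and ind: "indep_vars (\<lambda>_. Pi\<^sub>M {0..1} (\<lambda>_. borel)) (\<lambda>i \<omega>. restrict (W i \<omega>) {0..1}) UNIV"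
    and Yg: "\<forall>i. wiener_integral M (W i) g (Yg i)" and Yf: "\<forall>i. wiener_integral M (W i) f (Yf i)"
    and g: "in_L2 g" and f: "in_L2 f"
    and l: "2 * l * (L2norm (\<lambda>t. g t - f t))\<^sup>2 < 1"
  shows "(\<integral>\<^sup>+\<omega>. ennreal (exp (l * (\<Sum>i\<in>UNIV. (Yg i \<omega> - Yf i \<omega>)\<^sup>2))) \<partial>M)
       \<le> ennreal ((1 / sqrt (1 - 2 * l * (L2norm (\<lambda>t. g t - f t))\<^sup>2)) ^ CARD('d))"
proof -
  define s where "s = L2norm (\<lambda>t. g t - f t)"
  obtain ng tsg cg where G: "\<And>i. Yg i \<in> borel_measurable M" "\<And>i m. partition01 (ng i m) (tsg i m)"
      "\<And>i. (\<lambda>m. L2norm (\<lambda>t. g t - stepfun (ng i m) (tsg i m) (cg i m) t)) \<longlonglongrightarrow> 0"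
      "\<And>i. (\<lambda>m. \<integral>\<^sup>+ \<omega>. ennreal ((Yg i \<omega> - stepint (W i) (ng i m) (tsg i m) (cg i m) \<omega>)\<^sup>2) \<partial>M) \<longlonglongrightarrow> 0"
    using wi_choice[OF Yg] by blast
  obtain nf tsf cf where F: "\<And>i. Yf i \<in> borel_measurable M" "\<And>i m. partition01 (nf i m) (tsf i m)"
      "\<And>i. (\<lambda>m. L2norm (\<lambda>t. f t - stepfun (nf i m) (tsf i m) (cf i m) t)) \<longlonglongrightarrow> 0"
      "\<And>i. (\<lambda>m. \<integral>\<^sup>+ \<omega>. ennreal ((Yf i \<omega> - stepint (W i) (nf i m) (tsf i m) (cf i m) \<omega>)\<^sup>2) \<partial>M) \<longlonglongrightarrow> 0"
    using wi_choice[OF Yf] by blast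
  define Sg where "Sg = (\<lambda>i m. stepint (W i) (ng i m) (tsg i m) (cg i m))"
  define Sf where "Sf = (\<lambda>i m. stepint (W i) (nf i m) (tsf i m) (cf i m))"
  define S where "S = (\<lambda>i m \<omega>. Sg i m \<omega> - Sf i m \<omega>)"
  define Y where "Y = (\<lambda>i \<omega>. Yg i \<omega> - Yf i \<omega>)"
  define \<sigma> where "\<sigma> = (\<lambda>i m. L2norm (\<lambda>t. stepfun (ng i m) (tsg i m) (cg i m) t - stepfun (nf i m) (tsf i m) (cf i m) t))"
  have Sgm: "Sg i m \<in> borel_measurable M" for i m
    unfolding Sg_def using stepint_measurable[OF W[rule_format] G(2)] .
  have Sfm: "Sf i m \<in> borel_measurable M" for i m
    unfolding Sf_def using stepint_measurable[OF W[rule_format] F(2)] .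
  have Sm: "S i m \<in> borel_measurable M" for i m unfolding S_def using Sgm Sfm by measurable
  have Ym: "Y i \<in> borel_measurable M" for i unfolding Y_def using G(1) F(1) by measurable
  have \<sigma>lim: "(\<lambda>m. \<sigma> i m) \<longlonglongrightarrow> s" for i
  proof (rule tendsto_by_bound)
    fix m
    show "\<bar>\<sigma> i m - s\<bar> \<le> L2norm (\<lambda>t. g t - stepfun (ng i m) (tsg i m) (cg i m) t) + L2norm (\<lambda>t. f t - stepfun (nf i m) (tsf i m) (cf i m) t)"
      unfolding \<sigma>_def s_def by (rule L2norm_approx[OF stepfun_in_L2[OF G(2)] stepfun_in_L2[OF F(2)] g f])
  next
    show "(\<lambda>m. L2norm (\<lambda>t. g t - stepfun (ng i m) (tsg i m) (cg i m) t) + L2norm (\<lambda>t. f t - stepfun (nf i m) (tsf i m) (cf i m) t)) \<longlonglongrightarrow> 0"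
      using tendsto_add[OF G(3) F(3)] by simp
  qed
  have mgf_m: "(\<integral>\<^sup>+\<omega>. ennreal (exp (l * (\<Sum>i\<in>UNIV. (S i m \<omega>)\<^sup>2))) \<partial>M)
      = ennreal (\<Prod>i\<in>UNIV. 1 / sqrt (1 - 2 * l * (\<sigma> i m)\<^sup>2))" if "\<forall>i. 2 * l * (\<sigma> i m)\<^sup>2 < 1" for m
    unfolding S_def Sg_def Sf_def \<sigma>_def
    by (rule indep_mgf_step[OF W ind G(2) F(2)]) (use that in \<open>simp add: \<sigma>_def\<close>)
  define E where "E = (\<lambda>m \<omega>. \<Sum>i\<in>UNIV. (Y i \<omega> - S i m \<omega>)\<^sup>2)"
  have Em: "E m \<in> borel_measurable M" for m unfolding E_def using Ym Sm by measurable
  have Enn: "0 \<le> E m \<omega>" for m \<omega> unfolding E_def by (simp add: sum_nonneg)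
  have Elim: "(\<lambda>m. \<integral>\<^sup>+\<omega>. ennreal (E m \<omega>) \<partial>M) \<longlonglongrightarrow> 0"
  proof (rule tendsto_sandwich[where f="\<lambda>_. 0"])
    define B where "B = (\<lambda>m. \<Sum>i\<in>UNIV. 2 * (\<integral>\<^sup>+ \<omega>. ennreal ((Yg i \<omega> - Sg i m \<omega>)\<^sup>2) \<partial>M)
        + 2 * (\<integral>\<^sup>+ \<omega>. ennreal ((Yf i \<omega> - Sf i m \<omega>)\<^sup>2) \<partial>M))"
    show "eventually (\<lambda>m. 0 \<le> (\<integral>\<^sup>+\<omega>. ennreal (E m \<omega>) \<partial>M)) sequentially" by simp
    show "(\<lambda>_. 0::ennreal) \<longlonglongrightarrow> 0" by simp
    have "(\<integral>\<^sup>+\<omega>. ennreal (E m \<omega>) \<partial>M) \<le> B m" for m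
    proof -
      have "(\<integral>\<^sup>+\<omega>. ennreal (E m \<omega>) \<partial>M) \<le> (\<integral>\<^sup>+\<omega>. (\<Sum>i\<in>UNIV. 2 * ennreal ((Yg i \<omega> - Sg i m \<omega>)\<^sup>2)
          + 2 * ennreal ((Yf i \<omega> - Sf i m \<omega>)\<^sup>2)) \<partial>M)"
      proof (intro nn_integral_mono)
        fix \<omega>
        have "ennreal (E m \<omega>) \<le> ennreal (\<Sum>i\<in>UNIV. 2 * (Yg i \<omega> - Sg i m \<omega>)\<^sup>2 + 2 * (Yf i \<omega> - Sf i m \<omega>)\<^sup>2)"
        proof (intro ennreal_leI)
          show "E m \<omega> \<le> (\<Sum>i\<in>UNIV. 2 * (Yg i \<omega> - Sg i m \<omega>)\<^sup>2 + 2 * (Yf i \<omega> - Sf i m \<omega>)\<^sup>2)"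
            unfolding E_def
          proof (intro sum_mono)
            fix i
            have "(Y i \<omega> - S i m \<omega>)\<^sup>2 = ((Yg i \<omega> - Sg i m \<omega>) - (Yf i \<omega> - Sf i m \<omega>))\<^sup>2"
              unfolding Y_def S_def by (simp add: algebra_simps)
            also have "\<dots> \<le> 2 * (Yg i \<omega> - Sg i m \<omega>)\<^sup>2 + 2 * (Yf i \<omega> - Sf i m \<omega>)\<^sup>2" by (rule sq_diff_le)
            finally show "(Y i \<omega> - S i m \<omega>)\<^sup>2 \<le> 2 * (Yg i \<omega> - Sg i m \<omega>)\<^sup>2 + 2 * (Yf i \<omega> - Sf i m \<omega>)\<^sup>2" .
          qed
        qed
        also have "\<dots> = (\<Sum>i\<in>UNIV. 2 * ennreal ((Yg i \<omega> - Sg i m \<omega>)\<^sup>2) + 2 * ennreal ((Yf i \<omega> - Sf i m \<omega>)\<^sup>2))"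
        proof -
          have "ennreal (\<Sum>i\<in>UNIV. 2 * (Yg i \<omega> - Sg i m \<omega>)\<^sup>2 + 2 * (Yf i \<omega> - Sf i m \<omega>)\<^sup>2)
              = (\<Sum>i\<in>UNIV. ennreal (2 * (Yg i \<omega> - Sg i m \<omega>)\<^sup>2 + 2 * (Yf i \<omega> - Sf i m \<omega>)\<^sup>2))"
            by (rule sum_ennreal[symmetric]) simp
          also have "\<dots> = (\<Sum>i\<in>UNIV. 2 * ennreal ((Yg i \<omega> - Sg i m \<omega>)\<^sup>2) + 2 * ennreal ((Yf i \<omega> - Sf i m \<omega>)\<^sup>2))"
            by (intro sum.cong refl) (simp add: ennreal_mult')
          finally show ?thesis .
        qed
        finally show "ennreal (E m \<omega>) \<le> (\<Sum>i\<in>UNIV. 2 * ennreal ((Yg i \<omega> - Sg i m \<omega>)\<^sup>2) + 2 * ennreal ((Yf i \<omega> - Sf i m \<omega>)\<^sup>2))" .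
      qed
      also have "\<dots> = B m"
        unfolding B_def using G(1) F(1) Sgm Sfm
        by (simp add: nn_integral_sum nn_integral_add nn_integral_cmult)
      finally show ?thesis .
    qed
    then show "eventually (\<lambda>m. (\<integral>\<^sup>+\<omega>. ennreal (E m \<omega>) \<partial>M) \<le> B m) sequentially" by simp
    have each: "(\<lambda>m. 2 * (\<integral>\<^sup>+ \<omega>. ennreal ((Yg i \<omega> - Sg i m \<omega>)\<^sup>2) \<partial>M)
        + 2 * (\<integral>\<^sup>+ \<omega>. ennreal ((Yf i \<omega> - Sf i m \<omega>)\<^sup>2) \<partial>M)) \<longlonglongrightarrow> 2 * 0 + 2 * 0" for i
      unfolding Sg_def Sf_def
      by (rule tendsto_add[OF ennreal_tendsto_cmult[OF _ G(4)] ennreal_tendsto_cmult[OF _ F(4)]]) simp_all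
    have "B \<longlonglongrightarrow> (\<Sum>i\<in>(UNIV::'d set). 2 * 0 + 2 * 0)"
      unfolding B_def by (rule tendsto_sum[OF each])
    then show "B \<longlonglongrightarrow> 0" by simp
  qed
  obtain r where r: "filterlim r sequentially sequentially" and rAE: "AE \<omega> in M. (\<lambda>k. E (r k) \<omega>) \<longlonglongrightarrow> 0"
    using ae_subseq[OF Em Enn Elim] by blast
  define Q where "Q = (\<lambda>\<omega>. \<Sum>i\<in>UNIV. (Y i \<omega>)\<^sup>2)"
  define Qm where "Qm = (\<lambda>m \<omega>. \<Sum>i\<in>UNIV. (S i m \<omega>)\<^sup>2)"
  have conv: "AE \<omega> in M. (\<lambda>k. ennreal (exp (l * Qm (r k) \<omega>))) \<longlonglongrightarrow> ennreal (exp (l * Q \<omega>))"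
    using rAE
  proof (rule AE_mp, intro AE_I2 impI)
    fix \<omega> assume E0: "(\<lambda>k. E (r k) \<omega>) \<longlonglongrightarrow> 0"
    have Si: "(\<lambda>k. S i (r k) \<omega>) \<longlonglongrightarrow> Y i \<omega>" for i
    proof (rule tendsto_by_bound)
      fix k
      have "(S i (r k) \<omega> - Y i \<omega>)\<^sup>2 \<le> E (r k) \<omega>"
        unfolding E_def using member_le_sum[of i UNIV "\<lambda>i. (Y i \<omega> - S i (r k) \<omega>)\<^sup>2"]
        by (simp add: power2_commute)
      then show "\<bar>S i (r k) \<omega> - Y i \<omega>\<bar> \<le> sqrt (E (r k) \<omega>)" by (rule abs_le_sqrt_of_sq)
    next
      show "(\<lambda>k. sqrt (E (r k) \<omega>)) \<longlonglongrightarrow> 0" using tendsto_real_sqrt[OF E0] by simp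
    qed
    show "(\<lambda>k. ennreal (exp (l * Qm (r k) \<omega>))) \<longlonglongrightarrow> ennreal (exp (l * Q \<omega>))"
      unfolding Qm_def Q_def by (intro tendsto_intros Si)
  qed
  have Qmm: "(\<lambda>\<omega>. ennreal (exp (l * Qm m \<omega>))) \<in> borel_measurable M" for m
    unfolding Qm_def using Sm by measurable
  have \<sigma>r: "(\<lambda>k. \<sigma> i (r k)) \<longlonglongrightarrow> s" for i using filterlim_compose[OF \<sigma>lim r] by simp
  have ev: "eventually (\<lambda>k. \<forall>i. 2 * l * (\<sigma> i (r k))\<^sup>2 < 1) sequentially"
  proof (rule eventually_all_finite)
    fix i
    have "(\<lambda>k. 2 * l * (\<sigma> i (r k))\<^sup>2) \<longlonglongrightarrow> 2 * l * s\<^sup>2" by (intro tendsto_intros \<sigma>r)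
    then show "eventually (\<lambda>k. 2 * l * (\<sigma> i (r k))\<^sup>2 < 1) sequentially"
      using l unfolding s_def[symmetric] by (rule order_tendstoD(2))
  qed
  have q: "1 - 2 * l * s\<^sup>2 > 0" using l unfolding s_def by simp
  have lim2: "(\<lambda>k. ennreal (\<Prod>i\<in>UNIV. 1 / sqrt (1 - 2 * l * (\<sigma> i (r k))\<^sup>2)))
      \<longlonglongrightarrow> ennreal (\<Prod>i\<in>(UNIV::'d set). 1 / sqrt (1 - 2 * l * s\<^sup>2))"
    using q by (intro tendsto_intros \<sigma>r) auto
  have lim3: "(\<lambda>k. \<integral>\<^sup>+\<omega>. ennreal (exp (l * Qm (r k) \<omega>)) \<partial>M)
      \<longlonglongrightarrow> ennreal (\<Prod>i\<in>(UNIV::'d set). 1 / sqrt (1 - 2 * l * s\<^sup>2))"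
  proof (subst tendsto_cong)
    show "eventually (\<lambda>k. (\<integral>\<^sup>+\<omega>. ennreal (exp (l * Qm (r k) \<omega>)) \<partial>M)
        = ennreal (\<Prod>i\<in>UNIV. 1 / sqrt (1 - 2 * l * (\<sigma> i (r k))\<^sup>2))) sequentially"
      using ev by eventually_elim (simp add: Qm_def mgf_m)
  qed (rule lim2)
  have "(\<integral>\<^sup>+\<omega>. ennreal (exp (l * (\<Sum>i\<in>UNIV. (Yg i \<omega> - Yf i \<omega>)\<^sup>2))) \<partial>M)
      = (\<integral>\<^sup>+\<omega>. liminf (\<lambda>k. ennreal (exp (l * Qm (r k) \<omega>))) \<partial>M)"
  proof (intro nn_integral_cong_AE)
    show "AE \<omega> in M. ennreal (exp (l * (\<Sum>i\<in>UNIV. (Yg i \<omega> - Yf i \<omega>)\<^sup>2))) = liminf (\<lambda>k. ennreal (exp (l * Qm (r k) \<omega>)))"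
      using conv
    proof (rule AE_mp, intro AE_I2 impI)
      fix \<omega> assume "(\<lambda>k. ennreal (exp (l * Qm (r k) \<omega>))) \<longlonglongrightarrow> ennreal (exp (l * Q \<omega>))"
      from lim_imp_Liminf[OF _ this] show "ennreal (exp (l * (\<Sum>i\<in>UNIV. (Yg i \<omega> - Yf i \<omega>)\<^sup>2))) = liminf (\<lambda>k. ennreal (exp (l * Qm (r k) \<omega>)))"
        unfolding Q_def Y_def by simp
    qed
  qed
  also have "\<dots> \<le> liminf (\<lambda>k. \<integral>\<^sup>+\<omega>. ennreal (exp (l * Qm (r k) \<omega>)) \<partial>M)"
    by (rule nn_integral_liminf) (rule Qmm)
  also have "\<dots> = ennreal (\<Prod>i\<in>(UNIV::'d set). 1 / sqrt (1 - 2 * l * s\<^sup>2))"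
    by (rule lim_imp_Liminf[OF _ lim3]) simp
  also have "\<dots> = ennreal ((1 / sqrt (1 - 2 * l * s\<^sup>2)) ^ CARD('d))" by simp
  finally show ?thesis unfolding s_def .
qed

lemma chernoff_le_aux:
  assumes "prob_space M" and Qm: "Q \<in> borel_measurable M" and lam: "lam > 0"
  shows "emeasure M {x\<in>space M. Q x \<le> a} \<le> ennreal (exp (lam * a)) * (\<integral>\<^sup>+x. ennreal (exp (- lam * Q x)) \<partial>M)"
proof -
  have "emeasure M {x\<in>space M. Q x \<le> a} \<le> ennreal (exp (lam * a)) * (\<integral>\<^sup>+x. ennreal (exp (- lam * Q x)) * indicator (space M) x \<partial>M)"
    by (rule Chernoff_ineq_nn_integral_le[OF lam]) (use Qm in auto)
  also have "(\<integral>\<^sup>+x. ennreal (exp (- lam * Q x)) * indicator (space M) x \<partial>M) = (\<integral>\<^sup>+x. ennreal (exp (- lam * Q x)) \<partial>M)"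
    by (intro nn_integral_cong) simp
  finally show ?thesis .
qed

lemma chernoff_ge_aux:
  assumes "prob_space M" and Qm: "Q \<in> borel_measurable M" and lam: "lam > 0"
  shows "emeasure M {x\<in>space M. Q x \<ge> a} \<le> ennreal (exp (- lam * a)) * (\<integral>\<^sup>+x. ennreal (exp (lam * Q x)) \<partial>M)"
proof -
  have "emeasure M {x\<in>space M. Q x \<ge> a} \<le> ennreal (exp (- lam * a)) * (\<integral>\<^sup>+x. ennreal (exp (lam * Q x)) * indicator (space M) x \<partial>M)"
    by (rule Chernoff_ineq_nn_integral_ge[OF lam]) (use Qm in auto)
  also have "(\<integral>\<^sup>+x. ennreal (exp (lam * Q x)) * indicator (space M) x \<partial>M) = (\<integral>\<^sup>+x. ennreal (exp (lam * Q x)) \<partial>M)"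
    by (intro nn_integral_cong) simp
  finally show ?thesis .
qed

lemma sqrt_pow_exp: "0 < x \<Longrightarrow> (sqrt x) ^ d = exp (real d / 2 * ln x)"
proof -
  assume x: "0 < x"
  have "sqrt x = exp (ln x / 2)" using x by (simp add: powr_half_sqrt[symmetric] powr_def)
  then have "(sqrt x) ^ d = exp (real d * (ln x / 2))" by (simp only: exp_of_nat_mult)
  then show ?thesis by (simp add: field_simps)
qed

lemma lower_tail:
  assumes P: "prob_space M" and Qm: "Q \<in> borel_measurable M" and s: "s > 0"
    and t: "0 < \<tau>" "\<tau> < 1"
    and mgf: "\<And>lam. 2 * lam * s\<^sup>2 < 1 \<Longrightarrow> (\<integral>\<^sup>+\<omega>. ennreal (exp (lam * Q \<omega>)) \<partial>M) \<le> ennreal ((1 / sqrt (1 - 2 * lam * s\<^sup>2)) ^ d)"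
  shows "measure M {\<omega>\<in>space M. Q \<omega> \<le> (1 - \<tau>) * real d * s\<^sup>2} \<le> exp (real d / 2 * (\<tau> + ln (1 - \<tau>)))"
proof -
  define lam where "lam = \<tau> / (2 * (1 - \<tau>) * s\<^sup>2)"
  have lam: "lam > 0" using s t unfolding lam_def by simp
  have e1: "1 - 2 * (- lam) * s\<^sup>2 = 1 / (1 - \<tau>)" using s t unfolding lam_def by (simp add: field_simps)
  have e2: "lam * ((1 - \<tau>) * real d * s\<^sup>2) = real d / 2 * \<tau>" using s t unfolding lam_def by (simp add: field_simps)
  have e3: "(1 / sqrt (1 / (1 - \<tau>))) ^ d = exp (real d / 2 * ln (1 - \<tau>))"
    using t by (simp add: real_sqrt_divide sqrt_pow_exp)
  have "emeasure M {\<omega>\<in>space M. Q \<omega> \<le> (1 - \<tau>) * real d * s\<^sup>2}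
      \<le> ennreal (exp (lam * ((1 - \<tau>) * real d * s\<^sup>2))) * (\<integral>\<^sup>+x. ennreal (exp (- lam * Q x)) \<partial>M)"
    by (rule chernoff_le_aux[OF P Qm lam])
  also have "\<dots> \<le> ennreal (exp (lam * ((1 - \<tau>) * real d * s\<^sup>2))) * ennreal ((1 / sqrt (1 - 2 * (- lam) * s\<^sup>2)) ^ d)"
  proof (intro mult_left_mono mgf)
    have "0 \<le> lam * s\<^sup>2" using lam by simp
    then show "2 * - lam * s\<^sup>2 < 1" by simp
  qed simp
  also have "\<dots> = ennreal (exp (real d / 2 * (\<tau> + ln (1 - \<tau>))))"
    unfolding e1 e2 e3 by (simp add: ennreal_mult[symmetric] mult_exp_exp ring_distribs)
  finally show ?thesis
  proof -
    interpret prob_space M by (rule P)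
    assume "emeasure M {\<omega>\<in>space M. Q \<omega> \<le> (1 - \<tau>) * real d * s\<^sup>2} \<le> ennreal (exp (real d / 2 * (\<tau> + ln (1 - \<tau>))))"
    then show ?thesis by (simp add: emeasure_eq_measure)
  qed
qed

lemma upper_tail:
  assumes P: "prob_space M" and Qm: "Q \<in> borel_measurable M" and s: "0 \<le> s" "s \<le> \<delta>" and dl: "0 < \<delta>"
    and t: "0 < \<tau>"
    and mgf: "\<And>lam. 2 * lam * s\<^sup>2 < 1 \<Longrightarrow> (\<integral>\<^sup>+\<omega>. ennreal (exp (lam * Q \<omega>)) \<partial>M) \<le> ennreal ((1 / sqrt (1 - 2 * lam * s\<^sup>2)) ^ d)"
  shows "measure M {\<omega>\<in>space M. Q \<omega> \<ge> (1 + \<tau>) * real d * \<delta>\<^sup>2} \<le> exp (- (real d / 2) * (\<tau> - ln (1 + \<tau>)))"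
proof -
  interpret prob_space M by (rule P)
  define K where "K = (1 + \<tau>) * \<delta>\<^sup>2"
  have K: "K > 0" using dl t unfolding K_def by simp
  define lam where "lam = \<tau> / (2 * K)"
  have lam: "lam > 0" using K t unfolding lam_def by simp
  have h: "2 * lam * K = \<tau>" using K unfolding lam_def by simp
  have "(1 - 2 * lam * \<delta>\<^sup>2) * (1 + \<tau>) = 1" using h unfolding K_def by (simp add: algebra_simps)
  then have e1: "1 - 2 * lam * \<delta>\<^sup>2 = 1 / (1 + \<tau>)" using t by (simp add: eq_divide_eq)
  have "lam * (real d * K) = real d / 2 * \<tau>" using K unfolding lam_def by (simp add: field_simps)
  then have e2: "- lam * ((1 + \<tau>) * real d * \<delta>\<^sup>2) = - (real d / 2 * \<tau>)" unfolding K_def by (simp add: algebra_simps)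
  have e3: "(1 / sqrt (1 / (1 + \<tau>))) ^ d = exp (real d / 2 * ln (1 + \<tau>))"
    using t by (simp add: real_sqrt_divide sqrt_pow_exp)
  have ss: "s\<^sup>2 \<le> \<delta>\<^sup>2" using s by (simp add: power_mono)
  have lt1: "2 * lam * s\<^sup>2 < 1"
  proof -
    have "2 * lam * s\<^sup>2 \<le> 2 * lam * \<delta>\<^sup>2" using ss lam by simp
    also have "\<dots> < 1"
    proof -
      have "0 < 1 / (1 + \<tau>)" using t by simp
      then show ?thesis using e1 by linarith
    qed
    finally show ?thesis .
  qed
  have pos: "0 < 1 - 2 * lam * \<delta>\<^sup>2" using e1 t by simp
  have mono: "(1 / sqrt (1 - 2 * lam * s\<^sup>2)) ^ d \<le> (1 / sqrt (1 - 2 * lam * \<delta>\<^sup>2)) ^ d"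
  proof (rule power_mono)
    have "1 - 2 * lam * \<delta>\<^sup>2 \<le> 1 - 2 * lam * s\<^sup>2" using ss lam by simp
    then have "sqrt (1 - 2 * lam * \<delta>\<^sup>2) \<le> sqrt (1 - 2 * lam * s\<^sup>2)" by simp
    moreover have "0 < sqrt (1 - 2 * lam * \<delta>\<^sup>2)" using pos by simp
    ultimately show "1 / sqrt (1 - 2 * lam * s\<^sup>2) \<le> 1 / sqrt (1 - 2 * lam * \<delta>\<^sup>2)"
      by (simp add: frac_le)
    show "0 \<le> 1 / sqrt (1 - 2 * lam * s\<^sup>2)" using lt1 by simp
  qed
  have "emeasure M {\<omega>\<in>space M. Q \<omega> \<ge> (1 + \<tau>) * real d * \<delta>\<^sup>2}
      \<le> ennreal (exp (- lam * ((1 + \<tau>) * real d * \<delta>\<^sup>2))) * (\<integral>\<^sup>+x. ennreal (exp (lam * Q x)) \<partial>M)"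
    by (rule chernoff_ge_aux[OF P Qm lam])
  also have "\<dots> \<le> ennreal (exp (- lam * ((1 + \<tau>) * real d * \<delta>\<^sup>2))) * ennreal ((1 / sqrt (1 - 2 * lam * s\<^sup>2)) ^ d)"
    by (intro mult_left_mono mgf lt1) simp
  also have "\<dots> \<le> ennreal (exp (- lam * ((1 + \<tau>) * real d * \<delta>\<^sup>2))) * ennreal ((1 / sqrt (1 - 2 * lam * \<delta>\<^sup>2)) ^ d)"
    by (intro mult_left_mono ennreal_leI mono) simp
  also have "\<dots> = ennreal (exp (- (real d / 2) * (\<tau> - ln (1 + \<tau>))))"
    unfolding e1 e2 e3 by (simp add: ennreal_mult[symmetric] mult_exp_exp ring_distribs)
  finally show ?thesis by (simp add: emeasure_eq_measure)
qed

lemma zero_tail: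
  assumes P: "prob_space M" and Qm: "Q \<in> borel_measurable M" and t: "0 < \<tau>" and d: "0 < d"
    and mgf: "\<And>lam. (\<integral>\<^sup>+\<omega>. ennreal (exp (lam * Q \<omega>)) \<partial>M) \<le> 1"
  shows "measure M {\<omega>\<in>space M. Q \<omega> > 0} \<le> exp (- (real d / 2) * (\<tau> - ln (1 + \<tau>)))"
proof -
  interpret prob_space M by (rule P)
  define c where "c = real d / 2 * (\<tau> - ln (1 + \<tau>))"
  have c: "c > 0" using ln_add_one_self_less_self[OF t] d unfolding c_def by simp
  define A where "A = (\<lambda>n::nat. {\<omega>\<in>space M. Q \<omega> \<ge> 1 / Suc n})"
  have Ab: "measure M (A n) \<le> exp (- c)" for n
  proof -
    define lam where "lam = c * Suc n"
    have lam: "lam > 0" using c unfolding lam_def by simp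
    have "emeasure M (A n) \<le> ennreal (exp (- lam * (1 / Suc n))) * (\<integral>\<^sup>+x. ennreal (exp (lam * Q x)) \<partial>M)"
      unfolding A_def by (rule chernoff_ge_aux[OF P Qm lam])
    also have "\<dots> \<le> ennreal (exp (- lam * (1 / Suc n))) * 1" by (intro mult_left_mono mgf) simp
    also have "- lam * (1 / Suc n) = - c" unfolding lam_def by simp
    finally show ?thesis by (simp add: emeasure_eq_measure)
  qed
  have AU: "{\<omega>\<in>space M. Q \<omega> > 0} = (\<Union>n. A n)"
  proof
    show "{\<omega> \<in> space M. 0 < Q \<omega>} \<subseteq> \<Union> (range A)"
    proof
      fix \<omega> assume w: "\<omega> \<in> {\<omega> \<in> space M. 0 < Q \<omega>}"
      then obtain n where "inverse (real (Suc n)) < Q \<omega>" using reals_Archimedean[of "Q \<omega>"] by auto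
      then have "1 / real (Suc n) < Q \<omega>" by (simp add: inverse_eq_divide)
      then show "\<omega> \<in> \<Union> (range A)" using w unfolding A_def by (auto intro!: exI[of _ n])
    qed
    show "\<Union> (range A) \<subseteq> {\<omega> \<in> space M. 0 < Q \<omega>}"
      unfolding A_def by (auto elim: less_le_trans[rotated])
  qed
  have inc: "incseq A"
  proof (rule incseq_SucI)
    fix n show "A n \<subseteq> A (Suc n)" unfolding A_def
      by (auto elim!: order_trans[rotated] simp: frac_le)
  qed
  have "(\<lambda>n. measure M (A n)) \<longlonglongrightarrow> measure M (\<Union>n. A n)"
    by (rule finite_Lim_measure_incseq) (use Qm inc in \<open>auto simp: A_def\<close>)
  then have "measure M (\<Union>n. A n) \<le> exp (- c)" by (rule LIMSEQ_le_const2) (use Ab in auto)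
  then show ?thesis unfolding AU c_def by simp
qed

lemma normsq_vec: "(norm (v :: real ^ 'd)) \<^sup>2 = (\<Sum>i\<in>UNIV. (v $ i)\<^sup>2)"
  unfolding norm_vec_def L2_set_def by (simp add: sum_nonneg)

lemma L2norm_nonneg: "0 \<le> L2norm f"
  unfolding L2norm_def set_lebesgue_integral_def by (simp add: integral_nonneg)

lemma L2norm_swap: "L2norm (\<lambda>t. a t - b t) = L2norm (\<lambda>t. b t - a t)"
  unfolding L2norm_def by (simp add: power2_commute)

theorem theorem11:
  fixes M :: "'a measure"
    and W :: "'d::finite \<Rightarrow> 'a \<Rightarrow> real \<Rightarrow> real"
    and A :: "(real \<Rightarrow> real) \<Rightarrow> 'a \<Rightarrow> real ^ 'd"
    and F :: "(real \<Rightarrow> real) set"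
    and r :: nat
    and E :: "(real \<Rightarrow> real) \<Rightarrow> nat"
    and D :: "nat \<Rightarrow> (real \<Rightarrow> real)"
    and \<delta> \<zeta> \<tau>\<^sub>1 \<tau>\<^sub>2 :: real
    and f\<^sub>o :: "real \<Rightarrow> real"
    and z :: "'a \<Rightarrow> real ^ 'd"
  assumes "prob_space M"
    and "\<forall>i. std_wiener M (W i)"
    and "prob_space.indep_vars M (\<lambda>_. Pi\<^sub>M {0..1} (\<lambda>_. borel))
           (\<lambda>i \<omega>. restrict (W i \<omega>) {0..1}) UNIV"
    and "\<forall>f. in_L2 f \<longrightarrow> (\<forall>i. wiener_integral M (W i) f (\<lambda>\<omega>. A f \<omega> $ i))"
    and "\<forall>f\<in>F. in_L2 f"
    and "compression_code F r E D"
    and "distortion F E D = ereal \<delta>"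
    and "f\<^sub>o \<in> F"
    and "\<forall>\<omega>. norm (z \<omega>) \<le> \<zeta>"
    and "\<tau>\<^sub>1 > 0" and "0 < \<tau>\<^sub>2" and "\<tau>\<^sub>2 < 1"
  shows "\<exists>S\<in>sets M.
     measure M S > 1 - 2 ^ r * exp (real CARD('d) / 2 * (\<tau>\<^sub>2 + ln (1 - \<tau>\<^sub>2)))
                     - exp (- (real CARD('d) / 2) * (\<tau>\<^sub>1 - ln (1 + \<tau>\<^sub>1)))
   \<and> (\<forall>\<omega>\<in>S. \<forall>fhat.
        (fhat \<in> codebook F E D \<and>
         (\<forall>g\<in>codebook F E D.
            (norm (A f\<^sub>o \<omega> + z \<omega> - A fhat \<omega>))\<^sup>2 \<le> (norm (A f\<^sub>o \<omega> + z \<omega> - A g \<omega>))\<^sup>2))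
        \<longrightarrow> L2norm (\<lambda>t. fhat t - f\<^sub>o t)
              \<le> \<delta> * sqrt ((1 + \<tau>\<^sub>1) / (1 - \<tau>\<^sub>2))
                 + 2 * \<zeta> / sqrt ((1 - \<tau>\<^sub>2) * real CARD('d)))"
proof -
  note P = assms(1)
  interpret prob_space M by (rule P)
  note Wa = assms(2) and ind = assms(3) and Aw = assms(4) and FL2 = assms(5) and cc = assms(6)
    and dist = assms(7) and fo = assms(8) and zb = assms(9) and t1 = assms(10) and t2 = assms(11,12)
  define d where "d = CARD('d)"
  have d: "0 < d" unfolding d_def by simp
  define g0 where "g0 = D (E f\<^sub>o)"
  define C where "C = codebook F E D"
  define Q where "Q = (\<lambda>g \<omega>. \<Sum>i\<in>UNIV. (A g \<omega> $ i - A f\<^sub>o \<omega> $ i)\<^sup>2)"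
  define s where "s = (\<lambda>g. L2norm (\<lambda>t. g t - f\<^sub>o t))"
  define p1 where "p1 = exp (real d / 2 * (\<tau>\<^sub>2 + ln (1 - \<tau>\<^sub>2)))"
  define p2 where "p2 = exp (- (real d / 2) * (\<tau>\<^sub>1 - ln (1 + \<tau>\<^sub>1)))"
  have foL2: "in_L2 f\<^sub>o" using FL2 fo by blast
  have CL2: "in_L2 g" if gC: "g \<in> C" for g
  proof -
    obtain f where f: "f \<in> F" "g = D (E f)" using gC unfolding C_def codebook_def by blast
    then show ?thesis using cc unfolding compression_code_def by auto
  qed
  have Csub: "C \<subseteq> D ` {1..2^r}" unfolding C_def codebook_def using cc fo unfolding compression_code_def by auto
  have finC: "finite C" using finite_subset[OF Csub] by simp
  have cardC: "card C \<le> 2^r"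
  proof -
    have "card C \<le> card (D ` {1..2^r})" by (rule card_mono[OF _ Csub]) simp
    also have "\<dots> \<le> card {1..(2::nat)^r}" by (rule card_image_le) simp
    finally show ?thesis by simp
  qed
  have g0C: "g0 \<in> C" unfolding C_def codebook_def g0_def using fo by blast
  have sg0: "s g0 \<le> \<delta>"
  proof -
    have "ereal (L2norm (\<lambda>t. f\<^sub>o t - D (E f\<^sub>o) t)) \<le> distortion F E D"
      unfolding distortion_def using fo by (rule SUP_upper)
    then have "L2norm (\<lambda>t. f\<^sub>o t - D (E f\<^sub>o) t) \<le> \<delta>" using dist by simp
    then show ?thesis unfolding s_def g0_def by (subst L2norm_swap)
  qed
  have s_nn: "0 \<le> s g" for g unfolding s_def by (rule L2norm_nonneg)
  have dl: "0 \<le> \<delta>" using sg0 s_nn[of g0] by simp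
  have zeta: "0 \<le> \<zeta>" using zb by (meson norm_ge_zero order_trans)
  have Qm: "Q g \<in> borel_measurable M" if "g \<in> C" for g
  proof -
    have "(\<lambda>\<omega>. A g \<omega> $ i) \<in> borel_measurable M" for i
      using Aw CL2[OF that] unfolding wiener_integral_def by blast
    moreover have "(\<lambda>\<omega>. A f\<^sub>o \<omega> $ i) \<in> borel_measurable M" for i
      using Aw foL2 unfolding wiener_integral_def by blast
    ultimately show ?thesis unfolding Q_def by measurable
  qed
  have Qnn: "0 \<le> Q g \<omega>" for g \<omega> unfolding Q_def by (simp add: sum_nonneg)
  have mgf: "(\<integral>\<^sup>+\<omega>. ennreal (exp (lam * Q g \<omega>)) \<partial>M) \<le> ennreal ((1 / sqrt (1 - 2 * lam * (s g)\<^sup>2)) ^ d)"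
    if "g \<in> C" "2 * lam * (s g)\<^sup>2 < 1" for g lam
    unfolding Q_def s_def d_def
    by (rule mgf_bound[OF Wa ind, of g "\<lambda>i \<omega>. A g \<omega> $ i" f\<^sub>o "\<lambda>i \<omega>. A f\<^sub>o \<omega> $ i"])
       (use Aw CL2[OF that(1)] foL2 that(2) in \<open>auto simp: s_def\<close>)
  define B0 where "B0 = {\<omega>\<in>space M. (1 + \<tau>\<^sub>1) * real d * \<delta>\<^sup>2 < Q g0 \<omega>}"
  define Bg where "Bg = (\<lambda>g. {\<omega>\<in>space M. Q g \<omega> < (1 - \<tau>\<^sub>2) * real d * (s g)\<^sup>2})"
  define Bad where "Bad = B0 \<union> (\<Union>g\<in>C - {g0}. Bg g)"
  have B0m: "B0 \<in> sets M" unfolding B0_def using Qm[OF g0C] by measurable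
  have Bgm: "Bg g \<in> sets M" if "g \<in> C" for g unfolding Bg_def using Qm[OF that] by measurable
  have Badm: "Bad \<in> sets M" unfolding Bad_def using B0m Bgm finC by auto
  have p1pos: "0 < p1" unfolding p1_def by simp
  have mB0: "measure M B0 \<le> p2"
  proof (cases "\<delta> = 0")
    case True
    then have s0: "s g0 = 0" using sg0 s_nn[of g0] by simp
    have "B0 = {\<omega>\<in>space M. Q g0 \<omega> > 0}" unfolding B0_def True by simp
    also have "measure M \<dots> \<le> p2" unfolding p2_def
    proof (rule zero_tail[OF P Qm[OF g0C] t1 d])
      fix lam
      have "(\<integral>\<^sup>+\<omega>. ennreal (exp (lam * Q g0 \<omega>)) \<partial>M) \<le> ennreal ((1 / sqrt (1 - 2 * lam * (s g0)\<^sup>2)) ^ d)"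
        using s0 by (intro mgf g0C) simp
      then show "(\<integral>\<^sup>+\<omega>. ennreal (exp (lam * Q g0 \<omega>)) \<partial>M) \<le> 1" using s0 by simp
    qed
    finally show ?thesis .
  next
    case False
    then have dpos: "0 < \<delta>" using dl by simp
    have "measure M B0 \<le> measure M {\<omega>\<in>space M. Q g0 \<omega> \<ge> (1 + \<tau>\<^sub>1) * real d * \<delta>\<^sup>2}"
      by (rule finite_measure_mono) (use Qm[OF g0C] in \<open>auto simp: B0_def\<close>)
    also have "\<dots> \<le> p2" unfolding p2_def
      by (rule upper_tail[OF P Qm[OF g0C] s_nn sg0 dpos t1]) (rule mgf[OF g0C])
    finally show ?thesis .
  qed
  have mBg: "measure M (Bg g) \<le> p1" if gC: "g \<in> C" for g
  proof (cases "s g = 0")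
    case True
    then have "Bg g = {}" unfolding Bg_def using Qnn by (auto simp: not_less)
    then show ?thesis using p1pos by simp
  next
    case False
    then have spos: "0 < s g" using s_nn[of g] by simp
    have "measure M (Bg g) \<le> measure M {\<omega>\<in>space M. Q g \<omega> \<le> (1 - \<tau>\<^sub>2) * real d * (s g)\<^sup>2}"
      by (rule finite_measure_mono) (use Qm[OF gC] in \<open>auto simp: Bg_def\<close>)
    also have "\<dots> \<le> p1" unfolding p1_def
      by (rule lower_tail[OF P Qm[OF gC] spos t2]) (rule mgf[OF gC])
    finally show ?thesis .
  qed
  have mBad: "measure M Bad < 2 ^ r * p1 + p2"
  proof -
    have "measure M Bad \<le> measure M B0 + measure M (\<Union>g\<in>C - {g0}. Bg g)"
      unfolding Bad_def by (rule measure_Un_le) (use B0m Bgm finC in auto)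
    also have "measure M (\<Union>g\<in>C - {g0}. Bg g) \<le> (\<Sum>g\<in>C - {g0}. measure M (Bg g))"
      by (rule measure_UNION_le) (use finC Bgm in auto)
    also have "\<dots> \<le> (\<Sum>g\<in>C - {g0}. p1)" by (rule sum_mono) (rule mBg, blast)
    also have "\<dots> = real (card (C - {g0})) * p1" by simp
    also have "real (card (C - {g0})) = real (2^r) - 1 - (real (2^r) - real (card C))"
    proof -
      have "0 < card C" using g0C finC by (auto simp: card_gt_0_iff)
      then have c1: "1 \<le> card C" by simp
      show ?thesis using g0C finC c1 by (simp add: card_Diff_singleton of_nat_diff)
    qed
    finally have "measure M Bad \<le> p2 + (real (2^r) - 1 - (real (2^r) - real (card C))) * p1"
      using mB0 by simp
    also have "\<dots> \<le> p2 + (real (2^r) - 1) * p1"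
      using cardC p1pos by (intro add_left_mono mult_right_mono) (simp_all add: of_nat_le_iff[symmetric])
    also have "\<dots> < 2 ^ r * p1 + p2" using p1pos by (simp add: algebra_simps)
    finally show ?thesis .
  qed
  define Sg where "Sg = space M - Bad"
  have Sgm: "Sg \<in> sets M" unfolding Sg_def using Badm by auto
  have mS: "measure M Sg > 1 - 2 ^ r * p1 - p2"
    unfolding Sg_def using prob_compl[OF Badm] mBad by simp
  have tdet: "L2norm (\<lambda>t. fhat t - f\<^sub>o t)
              \<le> \<delta> * sqrt ((1 + \<tau>\<^sub>1) / (1 - \<tau>\<^sub>2)) + 2 * \<zeta> / sqrt ((1 - \<tau>\<^sub>2) * real d)"
    if w: "\<omega> \<in> Sg" and fh: "fhat \<in> C"
      and mini: "\<forall>g\<in>C. (norm (A f\<^sub>o \<omega> + z \<omega> - A fhat \<omega>))\<^sup>2 \<le> (norm (A f\<^sub>o \<omega> + z \<omega> - A g \<omega>))\<^sup>2"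
    for \<omega> fhat
  proof -
    define V where "V = (\<lambda>g. A g \<omega> - A f\<^sub>o \<omega>)"
    have nV: "norm (V g) = sqrt (Q g \<omega>)" for g
      unfolding V_def Q_def norm_vec_def L2_set_def by simp
    have ey: "A f\<^sub>o \<omega> + z \<omega> - A g \<omega> = z \<omega> - V g" for g unfolding V_def by (simp add: algebra_simps)
    have "(norm (z \<omega> - V fhat))\<^sup>2 \<le> (norm (z \<omega> - V g0))\<^sup>2"
      using mini g0C unfolding ey by blast
    then have "norm (z \<omega> - V fhat) \<le> norm (z \<omega> - V g0)"
      by (rule power2_le_imp_le) simp
    moreover have "norm (V fhat) \<le> norm (z \<omega>) + norm (z \<omega> - V fhat)"
      using norm_triangle_ineq4[of "z \<omega>" "z \<omega> - V fhat"] by simp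
    moreover have "norm (z \<omega> - V g0) \<le> norm (z \<omega>) + norm (V g0)" by (rule norm_triangle_ineq4)
    ultimately have nf: "norm (V fhat) \<le> 2 * \<zeta> + norm (V g0)" using zb[rule_format, of \<omega>] by linarith
    have wB: "\<omega> \<in> space M" "\<omega> \<notin> B0" "\<And>g. g \<in> C - {g0} \<Longrightarrow> \<omega> \<notin> Bg g"
      using w unfolding Sg_def Bad_def by auto
    have "Q g0 \<omega> \<le> (1 + \<tau>\<^sub>1) * real d * \<delta>\<^sup>2" using wB(1,2) unfolding B0_def by auto
    then have "norm (V g0) \<le> sqrt ((1 + \<tau>\<^sub>1) * real d * \<delta>\<^sup>2)" unfolding nV by simp
    also have "\<dots> = sqrt ((1 + \<tau>\<^sub>1) * real d) * \<delta>" using dl by (simp add: real_sqrt_mult)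
    finally have nV0: "norm (V g0) \<le> sqrt ((1 + \<tau>\<^sub>1) * real d) * \<delta>" .
    have q1: "0 < (1 - \<tau>\<^sub>2) * real d" using t2 d by simp
    have rat: "sqrt ((1 + \<tau>\<^sub>1) * real d) / sqrt ((1 - \<tau>\<^sub>2) * real d) = sqrt ((1 + \<tau>\<^sub>1) / (1 - \<tau>\<^sub>2))"
      using d by (simp add: real_sqrt_divide[symmetric])
    have rge1: "1 \<le> sqrt ((1 + \<tau>\<^sub>1) / (1 - \<tau>\<^sub>2))" using t1 t2 by simp
    have zt: "0 \<le> 2 * \<zeta> / sqrt ((1 - \<tau>\<^sub>2) * real d)" using zeta q1 by simp
    show ?thesis
    proof (cases "fhat = g0")
      case True
      have "L2norm (\<lambda>t. fhat t - f\<^sub>o t) \<le> \<delta>" using sg0 True unfolding s_def by simp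
      also have "\<dots> \<le> \<delta> * sqrt ((1 + \<tau>\<^sub>1) / (1 - \<tau>\<^sub>2))" using mult_left_mono[OF rge1 dl] by simp
      finally show ?thesis using zt by simp
    next
      case False
      then have "\<omega> \<notin> Bg fhat" using wB fh by blast
      then have "(1 - \<tau>\<^sub>2) * real d * (s fhat)\<^sup>2 \<le> Q fhat \<omega>" using wB(1) unfolding Bg_def by auto
      then have "sqrt ((1 - \<tau>\<^sub>2) * real d * (s fhat)\<^sup>2) \<le> norm (V fhat)" unfolding nV by simp
      moreover have "sqrt ((1 - \<tau>\<^sub>2) * real d * (s fhat)\<^sup>2) = sqrt ((1 - \<tau>\<^sub>2) * real d) * s fhat"
        using s_nn[of fhat] by (simp add: real_sqrt_mult)
      ultimately have "sqrt ((1 - \<tau>\<^sub>2) * real d) * s fhat \<le> sqrt ((1 + \<tau>\<^sub>1) * real d) * \<delta> + 2 * \<zeta>"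
        using nf nV0 by linarith
      then have "s fhat \<le> (sqrt ((1 + \<tau>\<^sub>1) * real d) * \<delta> + 2 * \<zeta>) / sqrt ((1 - \<tau>\<^sub>2) * real d)"
        using q1 by (simp add: pos_le_divide_eq mult.commute)
      also have "\<dots> = \<delta> * (sqrt ((1 + \<tau>\<^sub>1) * real d) / sqrt ((1 - \<tau>\<^sub>2) * real d)) + 2 * \<zeta> / sqrt ((1 - \<tau>\<^sub>2) * real d)"
        by (simp add: add_divide_distrib)
      finally show ?thesis unfolding rat s_def .
    qed
  qed
  show ?thesis
  proof (rule bexI[OF _ Sgm], intro conjI ballI allI impI)
    show "measure M Sg > 1 - 2 ^ r * exp (real CARD('d) / 2 * (\<tau>\<^sub>2 + ln (1 - \<tau>\<^sub>2)))
                     - exp (- (real CARD('d) / 2) * (\<tau>\<^sub>1 - ln (1 + \<tau>\<^sub>1)))"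
      using mS unfolding p1_def p2_def d_def .
  next
    fix \<omega> fhat assume w: "\<omega> \<in> Sg"
      and h: "fhat \<in> codebook F E D \<and> (\<forall>g\<in>codebook F E D.
            (norm (A f\<^sub>o \<omega> + z \<omega> - A fhat \<omega>))\<^sup>2 \<le> (norm (A f\<^sub>o \<omega> + z \<omega> - A g \<omega>))\<^sup>2)"
    show "L2norm (\<lambda>t. fhat t - f\<^sub>o t) \<le> \<delta> * sqrt ((1 + \<tau>\<^sub>1) / (1 - \<tau>\<^sub>2)) + 2 * \<zeta> / sqrt ((1 - \<tau>\<^sub>2) * real CARD('d))"
      using h unfolding C_def[symmetric] by (intro tdet[OF w, unfolded d_def]) auto
  qed
qed

end
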